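(* The homology class $[u_{\mathrm{edge}}(\bar e)]\in H_1(\Sigma;\mathbb Z)$ is divisible by $3$.
   Context: Setup: $D\subset\mathbb R^3$ regular dodecahedron centered at $0$, $\mathcal I\subset\mathrm{SO}(3)$ its rotation group, $\iota=-\mathrm{id}$. $\mathcal K$ = the five inscribed cubes; $V_o:=\mathbb Z^{\mathcal K}/\mathbb Z(\sum_{e\in\mathcal K}e)$, $\bar e$ the image of $e$. $\hat\Sigma$: surface $D$ with an $\mathcal I$- and $\iota$-invariant small open equilateral triangle removed around each vertex; $\Sigma$: $\hat\Sigma$ with boundary points $p\sim\iota p$ identified (closed oriented genus-10 surface). For an oriented edge $y$ of $D$ with initial point $in(y)$, $\delta_y$ is the loop in $\Sigma$ formed by the edge-type cell $y$ and the cell $\iota y$. For fixed $e\in\mathcal K$, $E$ is one of the two 4-element sets of pairwise non-adjacent (in the cube) vertices of $e$. $u_{\mathrm{edge}}:V_o\to Z_1(\Sigma)$ is the $\mathbb Z\mathcal I$-homomorphism with $u_{\mathrm{edge}}(\bar e)=\sum_{x\in E}\sum_{y:\,in(y)=x}\delta_y$. *)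

theory Defs
  imports "HOL-Analysis.Analysis" "HOL-Homology.Homology"
begin

definition quotient_top :: "'a topology \<Rightarrow> ('a \<Rightarrow> 'b) \<Rightarrow> 'b topology" where
  "quotient_top X q = topology (\<lambda>U. U \<subseteq> q ` topspace X \<and> openin X {x \<in> topspace X. q x \<in> U})"

definition gold :: real where "gold = (1 + sqrt 5) / 2"

text \<open>Standard vertex set of a regular dodecahedron centred at 0 (circumradius sqrt 3,
 edge length sqrt 5 - 1).\<close>
definition dodec_vertices :: "(real^3) set" where
  "dodec_vertices =
     {vector [a, b, d] | a b d. a \<in> {-1,1} \<and> b \<in> {-1,1} \<and> d \<in> {-1,1}}
   \<union> {vector [0, a / gold, b * gold] | a b. a \<in> {-1,1} \<and> b \<in> {-1,1}}
   \<union> {vector [a / gold, b * gold, 0] | a b. a \<in> {-1,1} \<and> b \<in> {-1,1}}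
   \<union> {vector [a * gold, 0, b / gold] | a b. a \<in> {-1,1} \<and> b \<in> {-1,1}}"

definition dodecahedron :: "(real^3) set" where
  "dodecahedron = convex hull dodec_vertices"

definition dodec_adjacent :: "real^3 \<Rightarrow> real^3 \<Rightarrow> bool" where
  "dodec_adjacent v w \<longleftrightarrow> v \<in> dodec_vertices \<and> w \<in> dodec_vertices \<and> dist v w = sqrt 5 - 1"

definition is_cube :: "(real^3) set \<Rightarrow> bool" where
  "is_cube S \<longleftrightarrow> (\<exists>m u1 u2 u3. u1 \<noteq> 0 \<and> norm u2 = norm u1 \<and> norm u3 = norm u1 \<and>
      u1 \<bullet> u2 = 0 \<and> u1 \<bullet> u3 = 0 \<and> u2 \<bullet> u3 = 0 \<and>
      S = {m + e1 *\<^sub>R u1 + e2 *\<^sub>R u2 + e3 *\<^sub>R u3 | e1 e2 e3.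
              e1 \<in> {-1,1} \<and> e2 \<in> {-1,1} \<and> e3 \<in> {-1,1}})"

definition inscribed_cubes :: "(real^3) set set" where
  "inscribed_cubes = {S. S \<subseteq> dodec_vertices \<and> is_cube S}"

text \<open>Adjacency of vertices of a cube (joined by a cube edge, i.e. at minimal distance).\<close>
definition cube_adjacent :: "(real^3) set \<Rightarrow> real^3 \<Rightarrow> real^3 \<Rightarrow> bool" where
  "cube_adjacent S x y \<longleftrightarrow> x \<in> S \<and> y \<in> S \<and> x \<noteq> y \<and> (\<forall>z\<in>S. z \<noteq> x \<longrightarrow> dist x y \<le> dist x z)"

text \<open>The parameter c (with sqrt 5 < c < 3) fixes the size of the removed triangles:
 around the vertex v the open cap of the surface of D with x \<bullet> v > c is removed.\<close>
definition Sigma_hat :: "real \<Rightarrow> (real^3) set" where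
  "Sigma_hat c = {x \<in> frontier dodecahedron. \<forall>v\<in>dodec_vertices. x \<bullet> v \<le> c}"

definition Sigma_bdry :: "real \<Rightarrow> (real^3) set" where
  "Sigma_bdry c = {x \<in> Sigma_hat c. \<exists>v\<in>dodec_vertices. x \<bullet> v = c}"

definition sigma_class :: "real \<Rightarrow> real^3 \<Rightarrow> (real^3) set" where
  "sigma_class c x = {y \<in> Sigma_hat c. y = x \<or> (x \<in> Sigma_bdry c \<and> y = - x)}"

definition Sigma_top :: "real \<Rightarrow> (real^3) set topology" where
  "Sigma_top c = quotient_top (top_of_set (Sigma_hat c)) (sigma_class c)"

definition seg_simplex :: "real \<Rightarrow> real^3 \<Rightarrow> real^3 \<Rightarrow> (nat \<Rightarrow> real) \<Rightarrow> (real^3) set" where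
  "seg_simplex c p q = restrict (\<lambda>t. sigma_class c (p + t 1 *\<^sub>R (q - p))) (standard_simplex 1)"

text \<open>Fraction of an edge of D cut off by a removed triangle.\<close>
definition cut_frac :: "real \<Rightarrow> real" where
  "cut_frac c = (3 - c) / (3 - sqrt 5)"

definition edge_cell :: "real \<Rightarrow> real^3 \<Rightarrow> real^3 \<Rightarrow> (nat \<Rightarrow> real) \<Rightarrow> (real^3) set" where
  "edge_cell c v w = seg_simplex c (v + cut_frac c *\<^sub>R (w - v)) (w + cut_frac c *\<^sub>R (v - w))"

text \<open>delta_y: the loop traversing the cell y and then the cell iota y backwards.\<close>
definition delta :: "real \<Rightarrow> real^3 \<Rightarrow> real^3 \<Rightarrow> (real^3) set chain" where
  "delta c v w = frag_of (edge_cell c v w) - frag_of (edge_cell c (- v) (- w))"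

definition u_edge :: "real \<Rightarrow> (real^3) set \<Rightarrow> (real^3) set chain" where
  "u_edge c E = (\<Sum>x\<in>E. \<Sum>w\<in>{w. dodec_adjacent x w}. delta c x w)"

end

theory Submission
  imports Defs
begin


definition zr :: "int \<times> int \<Rightarrow> real" where "zr p = of_int (fst p) + of_int (snd p) * sqrt 5"
definition zmul :: "int \<times> int \<Rightarrow> int \<times> int \<Rightarrow> int \<times> int" where
  "zmul x y = (fst x * fst y + 5 * snd x * snd y, fst x * snd y + snd x * fst y)"
definition zadd :: "int \<times> int \<Rightarrow> int \<times> int \<Rightarrow> int \<times> int" where
  "zadd x y = (fst x + fst y, snd x + snd y)"
fun znn :: "int \<times> int \<Rightarrow> bool" where
  "znn (p,q) = ((p \<ge> 0 \<and> q \<ge> 0) \<or> (p \<ge> 0 \<and> q < 0 \<and> p*p \<ge> 5*q*q) \<or> (p < 0 \<and> q \<ge> 0 \<and> 5*q*q \<ge> p*p))"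

lemma s5sq[simp]: "sqrt 5 * sqrt 5 = (5::real)" by simp

lemma zr_mul: "zr (zmul x y) = zr x * zr y"
  by (simp add: zmul_def zr_def algebra_simps)
lemma zr_add: "zr (zadd x y) = zr x + zr y"
  by (simp add: zadd_def zr_def algebra_simps)

lemma znn_sound: assumes "znn x" shows "zr x \<ge> 0"
proof (cases x)
  case (Pair p q)
  have s: "sqrt 5 \<ge> 0" by simp
  have key: "\<And>a b::real. a \<ge> 0 \<Longrightarrow> b \<ge> 0 \<Longrightarrow> a*a \<ge> b*b \<Longrightarrow> a \<ge> b"
    by (metis power2_eq_square power2_le_imp_le)
  show ?thesis using assms Pair
  proof (auto simp: zr_def)
    assume "0 \<le> p" "q < 0" "5*q*q \<le> p*p"
    then have "real_of_int p * real_of_int p \<ge> (- real_of_int q * sqrt 5) * (- real_of_int q * sqrt 5)"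
      by (simp add: algebra_simps) (metis of_int_le_iff of_int_mult of_int_numeral mult.assoc)
    then have "real_of_int p \<ge> - real_of_int q * sqrt 5"
      using key[of "real_of_int p" "- real_of_int q * sqrt 5"] \<open>0 \<le> p\<close> \<open>q<0\<close>
      by (simp add: mult_nonpos_nonneg)
    then show "0 \<le> real_of_int p + real_of_int q * sqrt 5" by simp
  next
    assume "p < 0" "0 \<le> q" "p*p \<le> 5*q*q"
    then have "(- real_of_int p) * (- real_of_int p) \<le> (real_of_int q * sqrt 5) * (real_of_int q * sqrt 5)"
      by (simp add: algebra_simps) (metis of_int_le_iff of_int_mult of_int_numeral mult.assoc)
    then have "- real_of_int p \<le> real_of_int q * sqrt 5"
      using key[of "real_of_int q * sqrt 5" "- real_of_int p"] \<open>p<0\<close> \<open>0 \<le> q\<close>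
      by simp
    then show "0 \<le> real_of_int p + real_of_int q * sqrt 5" by simp
  qed
qed

type_synonym z3 = "(int \<times> int) \<times> (int \<times> int) \<times> (int \<times> int)"

definition vec3 :: "z3 \<Rightarrow> real^3" where
  "vec3 x = vector [zr (fst x) / 2, zr (fst (snd x)) / 2, zr (snd (snd x)) / 2]"

definition zdot :: "z3 \<Rightarrow> z3 \<Rightarrow> int \<times> int" where
  "zdot x y = zadd (zadd (zmul (fst x) (fst y)) (zmul (fst (snd x)) (fst (snd y)))) (zmul (snd (snd x)) (snd (snd y)))"

lemma inner_vector3: "(vector [a1,a2,a3] :: real^3) \<bullet> vector [b1,b2,b3] = a1*b1 + a2*b2 + a3*b3"
  by (simp add: inner_vec_def sum_3)

lemma vec3_inner: "vec3 x \<bullet> vec3 y = zr (zdot x y) / 4"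
  by (simp add: vec3_def inner_vector3 zdot_def zr_add zr_mul field_simps)

definition VL :: "z3 list" where "VL = [((-2,0),(-2,0),(-2,0)), ((-2,0),(-2,0),(2,0)), ((-2,0),(2,0),(-2,0)), ((-2,0),(2,0),(2,0)), ((2,0),(-2,0),(-2,0)), ((2,0),(-2,0),(2,0)), ((2,0),(2,0),(-2,0)), ((2,0),(2,0),(2,0)), ((0,0),(1,-1),(-1,-1)), ((1,-1),(-1,-1),(0,0)), ((-1,-1),(0,0),(1,-1)), ((0,0),(1,-1),(1,1)), ((1,-1),(1,1),(0,0)), ((-1,-1),(0,0),(-1,1)), ((0,0),(-1,1),(-1,-1)), ((-1,1),(-1,-1),(0,0)), ((1,1),(0,0),(1,-1)), ((0,0),(-1,1),(1,1)), ((-1,1),(1,1),(0,0)), ((1,1),(0,0),(-1,1))]"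
definition NG :: "nat list" where "NG = [7, 6, 5, 4, 3, 2, 1, 0, 17, 18, 19, 14, 15, 16, 11, 12, 13, 8, 9, 10]"
definition vtx :: "nat \<Rightarrow> real^3" where "vtx i = vec3 (VL ! i)"
definition ng :: "nat \<Rightarrow> nat" where "ng i = NG ! i"

lemma F1: "list_all (\<lambda>i. zdot (VL!i) (VL!i) = (12,0)) [0..<20]"
  by code_simp
lemma F2: "list_all (\<lambda>i. list_all (\<lambda>j. i \<noteq> j \<longrightarrow> zdot (VL!i) (VL!j) \<in> set [(0,4),(4,0),(-4,0),(0,-4),(-12,0)]) [0..<20]) [0..<20]"
  by code_simp
lemma gold_pos: "gold > 0" unfolding gold_def by (simp add: add_pos_nonneg)
lemma zr_codes:
  "zr (0,0) / 2 = 0" "zr (2,0) / 2 = 1" "zr (-2,0) / 2 = -1"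
  "zr (1,1) / 2 = gold" "zr (-1,-1) / 2 = -gold"
  "zr (-1,1) / 2 = 1 / gold" "zr (1,-1) / 2 = -1 / gold"
proof -
  have g: "gold * ((sqrt 5 - 1)/2) = 1" unfolding gold_def by (simp add: algebra_simps)
  have ig: "1 / gold = (sqrt 5 - 1)/2" using g gold_pos by (simp add: field_simps)
  show "zr (0,0) / 2 = 0" "zr (2,0) / 2 = 1" "zr (-2,0) / 2 = -1"
    "zr (1,1) / 2 = gold" "zr (-1,-1) / 2 = -gold"
    "zr (-1,1) / 2 = 1 / gold" "zr (1,-1) / 2 = -1 / gold"
    by (simp_all add: zr_def ig) (simp_all add: gold_def field_simps)
qed

lemma vec3_simp: "vec3 (a,b,d) = vector [zr a / 2, zr b / 2, zr d / 2]" by (simp add: vec3_def)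

lemma set3: "{f a b d | a b d. a \<in> {-1,1} \<and> b \<in> {-1,1} \<and> d \<in> {-1,1::real}} =
  {f (-1) (-1) (-1), f (-1) (-1) 1, f (-1) 1 (-1), f (-1) 1 1, f 1 (-1) (-1), f 1 (-1) 1, f 1 1 (-1), f 1 1 1}"
  by auto
lemma set2: "{f a b | a b. a \<in> {-1,1} \<and> b \<in> {-1,1::real}} = {f (-1) (-1), f (-1) 1, f 1 (-1), f 1 1}"
  by auto

lemma dodec_vertices_list: "dodec_vertices = set (map vec3 VL)"
  unfolding dodec_vertices_def VL_def
  apply (simp only: list.map list.set vec3_simp zr_codes)
  apply (subst set3[where f="\<lambda>a b d. vector [a,b,d]"])
  apply (subst set2[where f="\<lambda>a b. vector [0, a / gold, b * gold]"])
  apply (subst set2[where f="\<lambda>a b. vector [a / gold, b * gold, 0]"])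
  apply (subst set2[where f="\<lambda>a b. vector [a * gold, 0, b / gold]"])
  by (auto simp: divide_minus_left)

lemma len_VL: "length VL = 20" by (simp add: VL_def)

lemma V_eq: "dodec_vertices = vtx ` {..<20}"
proof -
  have "set VL = (\<lambda>i. VL!i) ` {..<length VL}" by (rule set_conv_nth[THEN trans]) (auto simp: image_def)
  then show ?thesis unfolding dodec_vertices_list vtx_def by (simp add: len_VL image_image)
qed

lemma list_all_upt: "list_all P [0..<n] \<Longrightarrow> i < n \<Longrightarrow> P i"
  by (simp add: list_all_iff)

lemma dot_self: "i < 20 \<Longrightarrow> vtx i \<bullet> vtx i = 3"
  using list_all_upt[OF F1] by (simp add: vtx_def vec3_inner zr_def)

lemma dot_vals: assumes "i < 20" "j < 20" "i \<noteq> j"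
  shows "zdot (VL!i) (VL!j) \<in> {(0,4),(4,0),(-4,0),(0,-4),(-12,0)}"
  using list_all_upt[OF list_all_upt[OF F2 assms(1)] assms(2)] assms(3) by simp

lemma s5_bounds: "2 < sqrt (5::real)" "sqrt 5 < 3"
  by (simp add: real_less_rsqrt) (rule real_less_lsqrt, auto)

lemma dot_le: assumes "i < 20" "j < 20" "i \<noteq> j" shows "vtx i \<bullet> vtx j \<le> sqrt 5"
  using dot_vals[OF assms] s5_bounds by (auto simp: vtx_def vec3_inner zr_def)

lemma dot_s5: assumes "i < 20" "j < 20" shows "vtx i \<bullet> vtx j = sqrt 5 \<longleftrightarrow> zdot (VL!i) (VL!j) = (0,4)"
proof (cases "i = j")
  case True then show ?thesis using dot_self[OF assms(1)] s5_bounds F1 list_all_upt[OF F1 assms(1)] by auto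
next
  case False then show ?thesis using dot_vals[OF assms False] s5_bounds
    by (auto simp: vtx_def vec3_inner zr_def)
qed

lemma vtx_inj: assumes "i < 20" "j < 20" "vtx i = vtx j" shows "i = j"
  using dot_le[OF assms(1,2)] dot_self[OF assms(1)] assms(3) s5_bounds by force

definition zneg3 :: "z3 \<Rightarrow> z3" where
  "zneg3 x = ((- fst (fst x), - snd (fst x)), (- fst (fst (snd x)), - snd (fst (snd x))), (- fst (snd (snd x)), - snd (snd (snd x))))"

lemma F3: "list_all (\<lambda>i. NG!i < 20 \<and> VL!(NG!i) = zneg3 (VL!i)) [0..<20]"
  by code_simp

lemma vec3_neg: "vec3 (zneg3 x) = - vec3 x"
  by (simp add: vec3_def zneg3_def zr_def vec_eq_iff forall_3 vector_def algebra_simps)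

lemma ng_lt: "i < 20 \<Longrightarrow> ng i < 20" using list_all_upt[OF F3] by (simp add: ng_def)
lemma vtx_ng: "i < 20 \<Longrightarrow> vtx (ng i) = - vtx i"
  using list_all_upt[OF F3] by (simp add: ng_def vtx_def vec3_neg)

lemma V_neg: "uminus ` dodec_vertices = dodec_vertices"
proof -
  have "uminus ` dodec_vertices \<subseteq> dodec_vertices" for dummy :: bool
    unfolding V_eq using vtx_ng ng_lt by (auto simp: image_iff) (metis lessThan_iff ng_lt vtx_ng)
  then show ?thesis by (metis (no_types, lifting) equalityI image_subset_iff minus_minus rev_image_eqI subsetI)
qed

lemma norm_sq_vtx: "v \<in> dodec_vertices \<Longrightarrow> v \<bullet> v = 3"
  unfolding V_eq using dot_self by auto

lemma adj_iff: "dodec_adjacent v w \<longleftrightarrow> v \<in> dodec_vertices \<and> w \<in> dodec_vertices \<and> v \<bullet> w = sqrt 5"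
proof -
  have "dist v w = sqrt 5 - 1 \<longleftrightarrow> v \<bullet> w = sqrt 5" if "v \<in> dodec_vertices" "w \<in> dodec_vertices"
  proof -
    have d2: "(dist v w)^2 = 6 - 2 * (v \<bullet> w)"
      using norm_sq_vtx[OF that(1)] norm_sq_vtx[OF that(2)]
      by (simp add: dist_norm power2_norm_eq_inner inner_diff_left inner_diff_right inner_commute)
    have p: "sqrt 5 - 1 \<ge> (0::real)" using s5_bounds by simp
    have "dist v w = sqrt 5 - 1 \<longleftrightarrow> (dist v w)^2 = (sqrt 5 - 1)^2"
      using p by (metis power2_eq_iff_nonneg zero_le_dist)
    also have "(sqrt 5 - 1)^2 = 6 - 2 * sqrt (5::real)" by (simp add: power2_eq_square algebra_simps)
    finally show ?thesis using d2 by linarith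
  qed
  then show ?thesis unfolding dodec_adjacent_def by blast
qed


lemma D_neg: "uminus ` dodecahedron = dodecahedron"
  unfolding dodecahedron_def
  by (metis V_neg convex_hull_linear_image linear_uminus)

lemma D_closed: "closed dodecahedron"
  unfolding dodecahedron_def V_eq by (simp add: compact_imp_closed finite_imp_compact_convex_hull)

lemma frontier_neg: "x \<in> frontier dodecahedron \<longleftrightarrow> - x \<in> frontier dodecahedron"
proof -
  have i: "uminus ` interior dodecahedron = interior dodecahedron"
    by (metis D_neg interior_negations)
  have "- x \<in> dodecahedron \<longleftrightarrow> x \<in> dodecahedron"
    by (metis D_neg image_iff minus_minus)
  moreover have "- x \<in> interior dodecahedron \<longleftrightarrow> x \<in> interior dodecahedron"
    by (metis i image_iff minus_minus)
  ultimately show ?thesis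
    using D_closed by (simp add: frontier_def closure_closed)
qed

lemma SH_neg: "x \<in> Sigma_hat c \<longleftrightarrow> - x \<in> Sigma_hat c"
proof -
  have "(\<forall>v\<in>dodec_vertices. x \<bullet> v \<le> c) \<longleftrightarrow> (\<forall>v\<in>dodec_vertices. (- x) \<bullet> v \<le> c)"
    by (metis (no_types, lifting) V_neg image_iff inner_minus_left inner_minus_right minus_minus)
  then show ?thesis unfolding Sigma_hat_def using frontier_neg by auto
qed

lemma bdry_neg: "x \<in> Sigma_bdry c \<longleftrightarrow> - x \<in> Sigma_bdry c"
proof -
  have "(\<exists>v\<in>dodec_vertices. x \<bullet> v = c) \<longleftrightarrow> (\<exists>v\<in>dodec_vertices. (- x) \<bullet> v = c)"
    by (metis (no_types, lifting) V_neg image_iff inner_minus_left inner_minus_right minus_minus)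
  then show ?thesis unfolding Sigma_bdry_def using SH_neg by auto
qed

lemma class_neg:
  assumes "v \<in> dodec_vertices" "x \<bullet> v = c"
  shows "sigma_class c x = sigma_class c (- x)"
proof (cases "x \<in> Sigma_hat c")
  case True
  then have b: "x \<in> Sigma_bdry c" using assms by (auto simp: Sigma_bdry_def)
  then have "- x \<in> Sigma_bdry c" using bdry_neg by blast
  then show ?thesis using b unfolding sigma_class_def by auto
next
  case False
  then have "- x \<notin> Sigma_hat c" using SH_neg by blast
  then show ?thesis using False unfolding sigma_class_def Sigma_bdry_def by auto
qed


lemma class_neg':
  assumes "x \<in> Sigma_hat c \<Longrightarrow> \<exists>v\<in>dodec_vertices. x \<bullet> v = c"
  shows "sigma_class c x = sigma_class c (- x)"
  using assms class_neg SH_neg unfolding sigma_class_def Sigma_bdry_def by (cases "x \<in> Sigma_hat c") blast+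

lemma line_sum:
  assumes "dodec_adjacent v w"
  shows "(v + r *\<^sub>R (w - v)) \<bullet> v + (v + r *\<^sub>R (w - v)) \<bullet> w = 3 + sqrt 5"
proof -
  have "v \<bullet> v = 3" "w \<bullet> w = 3" "v \<bullet> w = sqrt 5" "w \<bullet> v = sqrt 5"
    using assms norm_sq_vtx by (auto simp: adj_iff inner_commute)
  then show ?thesis by (simp add: inner_add_left inner_diff_left algebra_simps)
qed

lemma delta_zero:
  assumes "c \<le> (3 + sqrt 5) / 2" "dodec_adjacent v w"
  shows "delta c v w = 0"
proof -
  let ?t = "cut_frac c"
  have pt: "\<And>s. (- v + ?t *\<^sub>R (- w - - v)) + s *\<^sub>R ((- w + ?t *\<^sub>R (- v - - w)) - (- v + ?t *\<^sub>R (- w - - v)))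
      = - (v + (?t + s * (1 - 2 * ?t)) *\<^sub>R (w - v))"
    by (simp add: vec_eq_iff algebra_simps)
  have pt2: "\<And>s. (v + ?t *\<^sub>R (w - v)) + s *\<^sub>R ((w + ?t *\<^sub>R (v - w)) - (v + ?t *\<^sub>R (w - v)))
      = (v + (?t + s * (1 - 2 * ?t)) *\<^sub>R (w - v))"
    by (simp add: vec_eq_iff algebra_simps)
  have cl: "sigma_class c (v + r *\<^sub>R (w - v)) = sigma_class c (- (v + r *\<^sub>R (w - v)))" for r
  proof (rule class_neg')
    let ?x = "v + r *\<^sub>R (w - v)"
    assume "?x \<in> Sigma_hat c"
    then have le: "?x \<bullet> v \<le> c" "?x \<bullet> w \<le> c"
      using assms(2) by (auto simp: Sigma_hat_def adj_iff)
    then have "?x \<bullet> v = c" using line_sum[OF assms(2), of r] assms(1) by argo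
    then show "\<exists>v\<in>dodec_vertices. ?x \<bullet> v = c" using assms(2) by (auto simp: adj_iff)
  qed
  have "edge_cell c (- v) (- w) = edge_cell c v w"
    unfolding edge_cell_def seg_simplex_def
    by (rule restrict_ext) (simp only: pt pt2 cl[symmetric])
  then show ?thesis by (simp add: delta_def)
qed

lemma u_edge_zero: "c \<le> (3 + sqrt 5) / 2 \<Longrightarrow> u_edge c E = 0"
  unfolding u_edge_def by (simp add: delta_zero)


lemma istop_quot: "istopology (\<lambda>U. U \<subseteq> q ` topspace X \<and> openin X {x \<in> topspace X. q x \<in> U})"
proof -
  have 1: "{x \<in> topspace X. q x \<in> S \<inter> T} = {x \<in> topspace X. q x \<in> S} \<inter> {x \<in> topspace X. q x \<in> T}" for S T by auto
  have 2: "{x \<in> topspace X. q x \<in> \<Union>K} = \<Union>((\<lambda>S. {x \<in> topspace X. q x \<in> S}) ` K)" for K by auto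
  show ?thesis unfolding istopology_def 1 2
    apply (intro conjI allI impI)
    subgoal by blast
    subgoal by (rule openin_Int) blast+
    subgoal by blast
    subgoal by (rule openin_Union) blast
    done
qed

lemma openin_quot: "openin (quotient_top X q) U \<longleftrightarrow> U \<subseteq> q ` topspace X \<and> openin X {x \<in> topspace X. q x \<in> U}"
  unfolding quotient_top_def by (simp add: istop_quot)

lemma topspace_quot: "topspace (quotient_top X q) = q ` topspace X"
proof -
  have "openin (quotient_top X q) (q ` topspace X)"
  proof -
    have "{x \<in> topspace X. q x \<in> q ` topspace X} = topspace X" by auto
    then show ?thesis unfolding openin_quot by simp
  qed
  then have "q ` topspace X \<subseteq> topspace (quotient_top X q)" by (simp add: openin_subset)
  moreover have "topspace (quotient_top X q) \<subseteq> q ` topspace X"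
    using openin_quot[of X q "topspace (quotient_top X q)"] openin_topspace[of "quotient_top X q"] by simp
  ultimately show ?thesis by blast
qed

lemma cont_quot: "continuous_map X (quotient_top X q) q"
  unfolding continuous_map topspace_quot
proof (intro conjI allI impI)
  fix U assume "openin (quotient_top X q) U"
  then show "openin X {x \<in> topspace X. q x \<in> U}" by (simp add: openin_quot)
qed simp

lemma cont_class: "continuous_map (top_of_set (Sigma_hat c)) (Sigma_top c) (sigma_class c)"
  unfolding Sigma_top_def by (rule cont_quot)

lemma continuous_map_scaleR_const:
  "continuous_map X euclideanreal f \<Longrightarrow> continuous_map X euclidean (\<lambda>x. f x *\<^sub>R (a :: 'b::real_normed_vector))"
  by (simp add: continuous_map_atin tendsto_scaleR)

lemma sing_simplex_class:
  assumes "continuous_map (subtopology (powertop_real UNIV) (standard_simplex p)) euclidean f"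
    and "\<And>t. t \<in> standard_simplex p \<Longrightarrow> f t \<in> Sigma_hat c"
  shows "singular_simplex p (Sigma_top c) (restrict (sigma_class c \<circ> f) (standard_simplex p))"
proof -
  have "continuous_map (subtopology (powertop_real UNIV) (standard_simplex p)) (top_of_set (Sigma_hat c)) f"
    using assms by (auto simp: continuous_map_in_subtopology)
  then have "continuous_map (subtopology (powertop_real UNIV) (standard_simplex p)) (Sigma_top c) (sigma_class c \<circ> f)"
    using cont_class continuous_map_compose by blast
  then show ?thesis unfolding singular_simplex_def
    by (auto intro: continuous_map_eq)
qed

lemma proj_cont: "continuous_map (subtopology (powertop_real UNIV) S) euclideanreal (\<lambda>t. t k)"
  by (rule continuous_map_from_subtopology) (auto intro: continuous_map_product_projection)

lemma aff1_cont: "continuous_map (subtopology (powertop_real UNIV) S) euclidean (\<lambda>t. a + t 1 *\<^sub>R (b - a) :: real^3)"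
  by (intro continuous_map_add continuous_map_scaleR_const proj_cont continuous_map_const[THEN iffD2]) auto

lemma aff2_cont: "continuous_map (subtopology (powertop_real UNIV) S) euclidean (\<lambda>t. a + t 1 *\<^sub>R (b - a) + t 2 *\<^sub>R (d - a) :: real^3)"
  by (intro continuous_map_add continuous_map_scaleR_const proj_cont continuous_map_const[THEN iffD2]) auto


lemma face_frontier:
  fixes V0 F :: "(real^3) set"
  assumes "finite V0" "F \<subseteq> V0" "\<And>v. v \<in> F \<Longrightarrow> n \<bullet> v = h" "\<And>u. u \<in> V0 \<Longrightarrow> n \<bullet> u \<le> h" "n \<noteq> 0"
  shows "convex hull F \<subseteq> frontier (convex hull V0)"
proof
  fix x assume x: "x \<in> convex hull F"
  have hF: "convex hull F \<subseteq> {y. n \<bullet> y = h}"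
    by (rule hull_minimal) (use assms(3) convex_hyperplane in auto)
  have hV: "convex hull V0 \<subseteq> {y. n \<bullet> y \<le> h}"
    by (rule hull_minimal) (use assms(4) convex_halfspace_le in auto)
  have xV: "x \<in> convex hull V0" using x assms(2) hull_mono by blast
  have closed: "closed (convex hull V0)" using assms(1) by (simp add: compact_imp_closed finite_imp_compact_convex_hull)
  have "x \<notin> interior (convex hull V0)"
  proof
    assume "x \<in> interior (convex hull V0)"
    then obtain e where e: "e > 0" "ball x e \<subseteq> convex hull V0" using mem_interior by blast
    let ?y = "x + (e / 2 / norm n) *\<^sub>R n"
    have "dist x ?y < e" using e assms(5) by (simp add: dist_norm)
    then have "?y \<in> convex hull V0" using e by auto
    then have "n \<bullet> ?y \<le> h" using hV by auto
    moreover have "n \<bullet> x = h" using hF x by auto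
    moreover have "n \<bullet> ?y = n \<bullet> x + e / 2 * norm n"
      using assms(5) by (simp add: inner_add_right power2_norm_eq_inner[symmetric] power2_eq_square)
    moreover have "e / 2 * norm n > 0" using e assms(5) by simp
    ultimately show False by linarith
  qed
  then show "x \<in> frontier (convex hull V0)" using xV closed by (simp add: frontier_def closure_closed)
qed

definition FL :: "nat list list" where
  "FL = [[14, 8, 0, 10, 2], [19, 16, 6, 18, 7], [17, 11, 5, 19, 7], [5, 11, 1, 9, 15], [3, 12, 2, 10, 13], [13, 10, 0, 9, 1], [15, 9, 0, 8, 4], [18, 12, 3, 17, 7], [5, 15, 4, 16, 19], [6, 16, 4, 8, 14], [3, 13, 1, 11, 17], [6, 14, 2, 12, 18]]"

definition zsub :: "int \<times> int \<Rightarrow> int \<times> int \<Rightarrow> int \<times> int" where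
  "zsub x y = (fst x - fst y, snd x - snd y)"
fun zpos :: "int \<times> int \<Rightarrow> bool" where
  "zpos (p,q) = ((p \<ge> 0 \<and> q \<ge> 0 \<and> (p > 0 \<or> q > 0)) \<or> (p > 0 \<and> q < 0 \<and> p*p > 5*q*q) \<or> (p < 0 \<and> q > 0 \<and> 5*q*q > p*p))"

definition zs :: "nat list \<Rightarrow> nat \<Rightarrow> int \<times> int" where
  "zs f u = foldr (\<lambda>v acc. zadd (zdot (VL!v) (VL!u)) acc) f (0,0)"

lemma zr_sub: "zr (zsub x y) = zr x - zr y" by (simp add: zsub_def zr_def algebra_simps)

lemma zpos_sound: assumes "zpos x" shows "zr x > 0"
proof (cases x)
  case (Pair p q)
  have key: "\<And>a b::real. a \<ge> 0 \<Longrightarrow> b \<ge> 0 \<Longrightarrow> a*a > b*b \<Longrightarrow> a > b"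
    by (metis mult_mono not_le)
  have s: "sqrt 5 > 0" by simp
  from assms Pair have "(p \<ge> 0 \<and> q \<ge> 0 \<and> (p > 0 \<or> q > 0)) \<or> (p > 0 \<and> q < 0 \<and> p*p > 5*q*q) \<or> (p < 0 \<and> q > 0 \<and> 5*q*q > p*p)"
    by simp
  then consider (a) "p \<ge> 0" "q \<ge> 0" "p > 0 \<or> q > 0" | (b) "p > 0" "q < 0" "p*p > 5*q*q" | (c) "p < 0" "q > 0" "5*q*q > p*p"
    by blast
  then show ?thesis
  proof cases
    case a
    then have "real_of_int p \<ge> 0" "real_of_int q * sqrt 5 \<ge> 0" "real_of_int p > 0 \<or> real_of_int q * sqrt 5 > 0"
      using s by auto
    then show ?thesis using Pair by (auto simp: zr_def)
  next
    case b
    then have "real_of_int p * real_of_int p > (- real_of_int q * sqrt 5) * (- real_of_int q * sqrt 5)"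
      by (simp add: algebra_simps) (metis of_int_less_iff of_int_mult of_int_numeral mult.assoc)
    then have "real_of_int p > - real_of_int q * sqrt 5"
      using key[of "real_of_int p" "- real_of_int q * sqrt 5"] b
      by (simp add: mult_nonpos_nonneg)
    then show ?thesis using Pair by (simp add: zr_def)
  next
    case c
    then have "(- real_of_int p) * (- real_of_int p) < (real_of_int q * sqrt 5) * (real_of_int q * sqrt 5)"
      by (simp add: algebra_simps) (metis of_int_less_iff of_int_mult of_int_numeral mult.assoc)
    then have "- real_of_int p < real_of_int q * sqrt 5"
      using key[of "real_of_int q * sqrt 5" "- real_of_int p"] c
      by simp
    then show ?thesis using Pair by (simp add: zr_def)
  qed
qed

lemma zs_inner: "sum_list (map vtx f) \<bullet> vtx u = zr (zs f u) / 4"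
  by (induction f) (simp_all add: zs_def inner_add_left vtx_def vec3_inner zr_add add_divide_distrib, simp add: zr_def)

definition face_ok :: "nat list \<Rightarrow> bool" where
  "face_ok f = (list_all (\<lambda>v. v < 20) f \<and> zpos (zs f (f!0)) \<and> list_all (\<lambda>v. zs f v = zs f (f!0)) f
     \<and> list_all (\<lambda>u. znn (zsub (zs f (f!0)) (zs f u))) [0..<20])"

lemma FL_ok: "list_all face_ok FL"
  unfolding FL_def face_ok_def by code_simp

lemma face_frontier_FL:
  assumes "f \<in> set FL"
  shows "convex hull (vtx ` set f) \<subseteq> frontier dodecahedron"
proof -
  have ok: "face_ok f" using FL_ok assms by (simp add: list_all_iff)
  let ?n = "sum_list (map vtx f)" and ?h = "zr (zs f (f!0)) / 4"
  have "?n \<bullet> vtx (f!0) = ?h" by (simp add: zs_inner)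
  moreover have "?h > 0" using ok zpos_sound by (simp add: face_ok_def)
  ultimately have n0: "?n \<noteq> 0" by auto
  show ?thesis unfolding dodecahedron_def
  proof (rule face_frontier[where n="?n" and h="?h"])
    show "finite dodec_vertices" by (simp add: V_eq)
    show "vtx ` set f \<subseteq> dodec_vertices" using ok by (auto simp: V_eq face_ok_def list_all_iff)
    show "\<And>v. v \<in> vtx ` set f \<Longrightarrow> ?n \<bullet> v = ?h" using ok by (auto simp: zs_inner face_ok_def list_all_iff)
    show "\<And>u. u \<in> dodec_vertices \<Longrightarrow> ?n \<bullet> u \<le> ?h"
    proof -
      fix u assume "u \<in> dodec_vertices"
      then obtain k where k: "k < 20" "u = vtx k" by (auto simp: V_eq)
      then have "znn (zsub (zs f (f!0)) (zs f k))" using ok by (auto simp: face_ok_def list_all_iff)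
      then have "zr (zs f (f!0)) - zr (zs f k) \<ge> 0" using znn_sound zr_sub by metis
      then show "?n \<bullet> u \<le> ?h" using k by (simp add: zs_inner divide_right_mono)
    qed
    show "?n \<noteq> 0" by (rule n0)
  qed
qed


definition pt :: "real \<Rightarrow> nat \<times> nat \<Rightarrow> real^3" where
  "pt c a = vtx (fst a) + cut_frac c *\<^sub>R (vtx (snd a) - vtx (fst a))"

definition adjz :: "nat \<Rightarrow> nat \<Rightarrow> bool" where "adjz i j = (zdot (VL!i) (VL!j) = (0,4))"

lemma adjz_dot: "i < 20 \<Longrightarrow> j < 20 \<Longrightarrow> adjz i j \<Longrightarrow> vtx i \<bullet> vtx j = sqrt 5"
  by (simp add: adjz_def dot_s5)

lemma cut_frac_bounds: assumes "(3 + sqrt 5)/2 < c" "c < 3"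
  shows "0 < cut_frac c" "cut_frac c < 1/2"
proof -
  have "3 - sqrt 5 > 0" using s5_bounds by simp
  then show "0 < cut_frac c" "cut_frac c < 1/2" using assms by (auto simp: cut_frac_def field_simps)
qed

lemma pt_dot_self: assumes "i < 20" "j < 20" "adjz i j" shows "pt c (i,j) \<bullet> vtx i = c"
proof -
  have "3 - sqrt 5 \<noteq> 0" using s5_bounds by simp
  moreover have "vtx j \<bullet> vtx i = sqrt 5" using adjz_dot[OF assms] by (simp add: inner_commute)
  moreover have "cut_frac c * (3 - sqrt 5) = 3 - c" using calculation(1) by (simp add: cut_frac_def)
  ultimately show ?thesis using dot_self[OF assms(1)]
    by (simp add: pt_def inner_add_left inner_diff_left algebra_simps)
qed

lemma pt_dot_le: assumes "(3 + sqrt 5)/2 < c" "c < 3" "i < 20" "j < 20" "adjz i j" "k < 20"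
  shows "pt c (i,j) \<bullet> vtx k \<le> c"
proof -
  let ?t = "cut_frac c"
  have t: "0 < ?t" "?t < 1/2" using cut_frac_bounds assms(1,2) by auto
  have e: "pt c (i,j) \<bullet> vtx k = (1 - ?t) * (vtx i \<bullet> vtx k) + ?t * (vtx j \<bullet> vtx k)"
    by (simp add: pt_def inner_add_left inner_diff_left algebra_simps)
  have ij: "i \<noteq> j" using assms(3,5) dot_self[of i] adjz_dot[of i j] s5_bounds by auto
  consider "k = i" | "k = j" | "k \<noteq> i" "k \<noteq> j" by blast
  then show ?thesis
  proof cases
    case 1 then show ?thesis using pt_dot_self[OF assms(3-5)] by simp
  next
    case 2
    have "vtx i \<bullet> vtx j = sqrt 5" using adjz_dot[OF assms(3-5)] .
    moreover have "?t * (3 - sqrt 5) = 3 - c" using s5_bounds by (simp add: cut_frac_def)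
    ultimately show ?thesis using 2 e dot_self[OF assms(4)] assms(1) by (simp add: algebra_simps)
  next
    case 3
    have "vtx i \<bullet> vtx k \<le> sqrt 5" "vtx j \<bullet> vtx k \<le> sqrt 5" using dot_le 3 assms by auto
    then have "pt c (i,j) \<bullet> vtx k \<le> (1 - ?t) * sqrt 5 + ?t * sqrt 5"
      unfolding e using t by (intro add_mono mult_left_mono) auto
    then show ?thesis using assms(1) s5_bounds by (simp add: algebra_simps)
  qed
qed

definition Kf :: "real \<Rightarrow> nat list \<Rightarrow> (real^3) set" where
  "Kf c f = convex hull (vtx ` set f) \<inter> {x. \<forall>u\<in>dodec_vertices. x \<bullet> u \<le> c}"

lemma convex_halfspaces: "convex {x::real^3. \<forall>u\<in>S. x \<bullet> u \<le> c}"
  unfolding convex_def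
proof (clarify)
  fix x y :: "real^3" and a b :: real and u
  assume "\<forall>u\<in>S. x \<bullet> u \<le> c" "\<forall>u\<in>S. y \<bullet> u \<le> c" "0 \<le> a" "0 \<le> b" "a + b = 1" "u \<in> S"
  then show "(a *\<^sub>R x + b *\<^sub>R y) \<bullet> u \<le> c"
    using convex_bound_le[of "x \<bullet> u" c "y \<bullet> u" a b] by (simp add: inner_add_left)
qed

lemma convex_Kf: "convex (Kf c f)"
  unfolding Kf_def by (intro convex_Int convex_convex_hull convex_halfspaces)

lemma Kf_SH: "f \<in> set FL \<Longrightarrow> Kf c f \<subseteq> Sigma_hat c"
  using face_frontier_FL unfolding Kf_def Sigma_hat_def by auto

lemma pt_Kf: assumes "(3 + sqrt 5)/2 < c" "c < 3" "i \<in> set f" "j \<in> set f" "i < 20" "j < 20" "adjz i j"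
  shows "pt c (i,j) \<in> Kf c f"
proof -
  let ?t = "cut_frac c"
  have t: "0 < ?t" "?t < 1/2" using cut_frac_bounds assms(1,2) by auto
  have "pt c (i,j) = (1 - ?t) *\<^sub>R vtx i + ?t *\<^sub>R vtx j" by (simp add: pt_def algebra_simps)
  moreover have "vtx i \<in> convex hull (vtx ` set f)" "vtx j \<in> convex hull (vtx ` set f)"
    using assms(3,4) by (auto intro: hull_inc)
  ultimately have "pt c (i,j) \<in> convex hull (vtx ` set f)"
    using t convexD[OF convex_convex_hull, of "vtx i" "vtx ` set f" "vtx j" "1 - ?t" ?t] by simp
  moreover have "\<forall>u\<in>dodec_vertices. pt c (i,j) \<bullet> u \<le> c"
    using pt_dot_le[OF assms(1,2,5,6,7)] by (auto simp: V_eq)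
  ultimately show ?thesis by (simp add: Kf_def)
qed

lemma ss1: assumes "s \<in> standard_simplex 1" shows "s 0 + s 1 = 1" "0 \<le> s 1" "0 \<le> s 0"
  using assms by (auto simp: standard_simplex_def)

lemma ss2: assumes "s \<in> standard_simplex 2" shows "s 0 + s 1 + s 2 = 1" "0 \<le> s 0" "0 \<le> s 1" "0 \<le> s 2"
proof -
  have "(\<Sum>i\<le>2. s i) = s 0 + s 1 + s 2" by (simp add: numeral_2_eq_2)
  then show "s 0 + s 1 + s 2 = 1" using assms by (simp add: standard_simplex_def)
qed (use assms in \<open>auto simp: standard_simplex_def\<close>)

definition tri :: "real \<Rightarrow> real^3 \<Rightarrow> real^3 \<Rightarrow> real^3 \<Rightarrow> (nat \<Rightarrow> real) \<Rightarrow> (real^3) set" where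
  "tri c A B D = restrict (\<lambda>s. sigma_class c (A + s 1 *\<^sub>R (B - A) + s 2 *\<^sub>R (D - A))) (standard_simplex 2)"

lemma seg_singular:
  assumes "convex K" "K \<subseteq> Sigma_hat c" "P \<in> K" "Q \<in> K"
  shows "singular_simplex 1 (Sigma_top c) (seg_simplex c P Q)"
proof -
  have "seg_simplex c P Q = restrict (sigma_class c \<circ> (\<lambda>s. P + s 1 *\<^sub>R (Q - P))) (standard_simplex 1)"
    by (simp add: seg_simplex_def o_def)
  moreover have "singular_simplex 1 (Sigma_top c) (restrict (sigma_class c \<circ> (\<lambda>s. P + s 1 *\<^sub>R (Q - P))) (standard_simplex 1))"
  proof (rule sing_simplex_class[OF aff1_cont])
    fix s assume s: "s \<in> standard_simplex 1"
    have "s 0 = 1 - s 1" using ss1[OF s] by simp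
    then have "P + s 1 *\<^sub>R (Q - P) = s 0 *\<^sub>R P + s 1 *\<^sub>R Q"
      by (simp only: \<open>s 0 = 1 - s 1\<close>) (simp add: algebra_simps)
    then have "P + s 1 *\<^sub>R (Q - P) \<in> K" using convexD[OF assms(1,3,4)] ss1[OF s] by simp
    then show "P + s 1 *\<^sub>R (Q - P) \<in> Sigma_hat c" using assms(2) by auto
  qed
  ultimately show ?thesis by simp
qed

lemma tri_singular:
  assumes "convex K" "K \<subseteq> Sigma_hat c" "A \<in> K" "B \<in> K" "D \<in> K"
  shows "singular_simplex 2 (Sigma_top c) (tri c A B D)"
proof -
  have "tri c A B D = restrict (sigma_class c \<circ> (\<lambda>s. A + s 1 *\<^sub>R (B - A) + s 2 *\<^sub>R (D - A))) (standard_simplex 2)"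
    by (simp add: tri_def o_def)
  moreover have "singular_simplex 2 (Sigma_top c) (restrict (sigma_class c \<circ> (\<lambda>s. A + s 1 *\<^sub>R (B - A) + s 2 *\<^sub>R (D - A))) (standard_simplex 2))"
  proof (rule sing_simplex_class[OF aff2_cont])
    fix s assume s: "s \<in> standard_simplex 2"
    have eq: "A + s 1 *\<^sub>R (B - A) + s 2 *\<^sub>R (D - A) = s 0 *\<^sub>R A + s 1 *\<^sub>R B + s 2 *\<^sub>R D"
    proof -
      have "s 0 = 1 - s 1 - s 2" using ss2[OF s] by simp
      then show ?thesis by (simp only: \<open>s 0 = 1 - s 1 - s 2\<close>) (simp add: algebra_simps)
    qed
    have "convex hull {A, B, D} \<subseteq> K" using assms by (simp add: hull_minimal)
    moreover have "s 0 *\<^sub>R A + s 1 *\<^sub>R B + s 2 *\<^sub>R D \<in> convex hull {A, B, D}"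
      unfolding convex_hull_3 using ss2[OF s] by blast
    ultimately show "A + s 1 *\<^sub>R (B - A) + s 2 *\<^sub>R (D - A) \<in> Sigma_hat c" using eq assms(2) by auto
  qed
  ultimately show ?thesis by simp
qed

lemma diff21: "(2::nat) - Suc 0 = 1" by simp
lemma diff10: "(1::nat) - Suc 0 = 0" by simp

lemma sf_in2: "s \<in> standard_simplex 1 \<Longrightarrow> k \<le> 2 \<Longrightarrow> simplical_face k s \<in> standard_simplex 2"
  using simplical_face_in_standard_simplex[of 2 k s] by simp

lemma tri_face0: "singular_face 2 0 (tri c A B D) = seg_simplex c B D"
  unfolding singular_face_def seg_simplex_def diff21
proof (rule restrict_ext)
  fix s assume s1: "s \<in> standard_simplex 1"
  have "s 0 = 1 - s 1" using ss1[OF s1] by simp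
  then have eq: "A + s 0 *\<^sub>R (B - A) + s 1 *\<^sub>R (D - A) = B + s 1 *\<^sub>R (D - B)"
    by (simp only: \<open>s 0 = 1 - s 1\<close>) (simp add: algebra_simps)
  show "(tri c A B D \<circ> simplical_face 0) s = sigma_class c (B + s 1 *\<^sub>R (D - B))"
    using sf_in2[OF s1, of 0] eq by (simp add: tri_def simplical_face_def)
qed

lemma tri_face1: "singular_face 2 1 (tri c A B D) = seg_simplex c A D"
  unfolding singular_face_def seg_simplex_def diff21
proof (rule restrict_ext)
  fix s assume s1: "s \<in> standard_simplex 1"
  show "(tri c A B D \<circ> simplical_face 1) s = sigma_class c (A + s 1 *\<^sub>R (D - A))"
    using sf_in2[OF s1, of 1] by (simp add: tri_def simplical_face_def)
qed

lemma tri_face2: "singular_face 2 2 (tri c A B D) = seg_simplex c A B"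
  unfolding singular_face_def seg_simplex_def diff21
proof (rule restrict_ext)
  fix s assume s1: "s \<in> standard_simplex 1"
  show "(tri c A B D \<circ> simplical_face 2) s = sigma_class c (A + s 1 *\<^sub>R (B - A))"
    using sf_in2[OF s1, of 2] by (simp add: tri_def simplical_face_def)
qed

lemma bd_tri: "chain_boundary 2 (frag_of (tri c A B D)) =
   frag_of (seg_simplex c B D) - frag_of (seg_simplex c A D) + frag_of (seg_simplex c A B)"
proof -
  have "{..2::nat} = {0,1,2}" by auto
  then show ?thesis by (simp add: chain_boundary_of tri_face0 tri_face1[unfolded One_nat_def] tri_face2)
qed

definition pt0 :: "real \<Rightarrow> real^3 \<Rightarrow> (nat \<Rightarrow> real) \<Rightarrow> (real^3) set" where
  "pt0 c X = restrict (\<lambda>_. sigma_class c X) (standard_simplex 0)"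

lemma bd_seg: "chain_boundary 1 (frag_of (seg_simplex c P Q)) = frag_of (pt0 c Q) - frag_of (pt0 c P)"
proof -
  have f0: "singular_face 1 0 (seg_simplex c P Q) = pt0 c Q"
    unfolding singular_face_def pt0_def diff10
  proof (rule restrict_ext)
    fix s assume "s \<in> standard_simplex 0"
    then have "simplical_face 0 s \<in> standard_simplex 1" "s 0 = 1"
      using simplical_face_in_standard_simplex[of 1 0 s] by (auto simp: standard_simplex_0)
    then show "(seg_simplex c P Q \<circ> simplical_face 0) s = sigma_class c Q"
      by (simp add: seg_simplex_def simplical_face_def)
  qed
  have f1: "singular_face 1 1 (seg_simplex c P Q) = pt0 c P"
    unfolding singular_face_def pt0_def diff10
  proof (rule restrict_ext)
    fix s assume "s \<in> standard_simplex 0"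
    then have "simplical_face 1 s \<in> standard_simplex 1"
      using simplical_face_in_standard_simplex[of 1 1 s] by auto
    then show "(seg_simplex c P Q \<circ> simplical_face 1) s = sigma_class c P"
      by (simp add: seg_simplex_def simplical_face_def)
  qed
  have "{..1::nat} = {0,1}" by auto
  then show ?thesis by (simp add: chain_boundary_of f0[unfolded One_nat_def] f1[unfolded One_nat_def])
qed


type_synonym lab = "nat \<times> nat"

definition lkey :: "nat list \<Rightarrow> lab \<Rightarrow> int" where
  "lkey CL a = (if fst a \<in> set CL then 0 else 160000) + min (int (fst a) * 20 + int (snd a)) (int (ng (fst a)) * 20 + int (ng (snd a))) * 400 + (int (fst a) * 20 + int (snd a))"

definition segL :: "real \<Rightarrow> lab \<Rightarrow> lab \<Rightarrow> (nat \<Rightarrow> real) \<Rightarrow> (real^3) set" where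
  "segL c a b = seg_simplex c (pt c a) (pt c b)"

definition triL :: "real \<Rightarrow> lab \<Rightarrow> lab \<Rightarrow> lab \<Rightarrow> (nat \<Rightarrow> real) \<Rightarrow> (real^3) set" where
  "triL c a b d = tri c (pt c a) (pt c b) (pt c d)"

definition oseg :: "nat list \<Rightarrow> real \<Rightarrow> lab \<Rightarrow> lab \<Rightarrow> (real^3) set chain" where
  "oseg CL c a b = (if lkey CL a < lkey CL b then frag_of (segL c a b) else - frag_of (segL c b a))"

lemma oseg_anti: "lkey CL a \<noteq> lkey CL b \<Longrightarrow> oseg CL c b a = - oseg CL c a b"
  by (auto simp: oseg_def)

definition otri :: "nat list \<Rightarrow> real \<Rightarrow> lab \<Rightarrow> lab \<Rightarrow> lab \<Rightarrow> (real^3) set chain" where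
  "otri CL c a b d = (let ka = lkey CL a; kb = lkey CL b; kd = lkey CL d in
     if ka < kb \<and> kb < kd then frag_of (triL c a b d)
     else if ka < kd \<and> kd < kb then - frag_of (triL c a d b)
     else if kb < ka \<and> ka < kd then - frag_of (triL c b a d)
     else if kb < kd \<and> kd < ka then frag_of (triL c b d a)
     else if kd < ka \<and> ka < kb then frag_of (triL c d a b)
     else - frag_of (triL c d b a))"

lemma bd_triL: "chain_boundary 2 (frag_of (triL c a b d)) =
   frag_of (segL c b d) - frag_of (segL c a d) + frag_of (segL c a b)"
  by (simp add: triL_def segL_def bd_tri)

lemma bd_otri:
  assumes "lkey CL a \<noteq> lkey CL b" "lkey CL b \<noteq> lkey CL d" "lkey CL a \<noteq> lkey CL d"
  shows "chain_boundary 2 (otri CL c a b d) = oseg CL c a b + oseg CL c b d + oseg CL c d a"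
proof -
  let ?a = "lkey CL a" and ?b = "lkey CL b" and ?d = "lkey CL d"
  consider "?a < ?b" "?b < ?d" | "?a < ?d" "?d < ?b" | "?b < ?a" "?a < ?d" | "?b < ?d" "?d < ?a"
    | "?d < ?a" "?a < ?b" | "?d < ?b" "?b < ?a"
    using assms by linarith
  then show ?thesis
  proof cases
    case 1 then show ?thesis by (simp add: otri_def oseg_def bd_triL algebra_simps)
  next
    case 2 then show ?thesis by (simp add: otri_def oseg_def bd_triL chain_boundary_minus algebra_simps)
  next
    case 3 then show ?thesis by (simp add: otri_def oseg_def bd_triL chain_boundary_minus algebra_simps)
  next
    case 4 then show ?thesis by (simp add: otri_def oseg_def bd_triL algebra_simps)
  next
    case 5 then show ?thesis by (simp add: otri_def oseg_def bd_triL algebra_simps)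
  next
    case 6 then show ?thesis by (simp add: otri_def oseg_def bd_triL chain_boundary_minus algebra_simps)
  qed
qed

fun fan :: "nat list \<Rightarrow> real \<Rightarrow> lab \<Rightarrow> lab list \<Rightarrow> (real^3) set chain" where
  "fan CL c x (y # z # r) = otri CL c x y z + fan CL c x (z # r)"
| "fan CL c x _ = 0"

fun plist :: "lab list \<Rightarrow> (int \<times> (lab \<times> lab)) list" where
  "plist (y # z # r) = (1, (y, z)) # plist (z # r)"
| "plist _ = []"

definition L2C :: "nat list \<Rightarrow> real \<Rightarrow> (int \<times> (lab \<times> lab)) list \<Rightarrow> (real^3) set chain" where
  "L2C CL c xs = sum_list (map (\<lambda>e. frag_cmul (fst e) (oseg CL c (fst (snd e)) (snd (snd e)))) xs)"

lemma L2C_Nil[simp]: "L2C CL c [] = 0" by (simp add: L2C_def)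
lemma L2C_Cons[simp]: "L2C CL c (e # xs) = frag_cmul (fst e) (oseg CL c (fst (snd e)) (snd (snd e))) + L2C CL c xs"
  by (simp add: L2C_def)
lemma L2C_append[simp]: "L2C CL c (xs @ ys) = L2C CL c xs + L2C CL c ys"
  by (simp add: L2C_def)

lemma bd_fan:
  assumes "distinct (map (lkey CL) (x # y # ys))"
  shows "chain_boundary 2 (fan CL c x (y # ys)) = oseg CL c x y + L2C CL c (plist (y # ys)) + oseg CL c (last (y # ys)) x"
  using assms
proof (induction ys arbitrary: y)
  case Nil
  then have "lkey CL x \<noteq> lkey CL y" by auto
  from oseg_anti[OF this, of c] show ?case by simp
next
  case (Cons z r)
  have d: "distinct (map (lkey CL) (x # z # r))" using Cons.prems by auto
  have k: "lkey CL x \<noteq> lkey CL y" "lkey CL y \<noteq> lkey CL z" "lkey CL x \<noteq> lkey CL z" using Cons.prems by auto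
  have ab: "\<And>a b c d e::'z::ab_group_add. a + b + (- c) + (c + d + e) = a + (b + d) + e"
    by (simp add: algebra_simps)
  have "chain_boundary 2 (fan CL c x (y # z # r)) = chain_boundary 2 (otri CL c x y z) + chain_boundary 2 (fan CL c x (z # r))"
    by (simp add: chain_boundary_add)
  also have "\<dots> = oseg CL c x y + oseg CL c y z + (- oseg CL c x z) + (oseg CL c x z + L2C CL c (plist (z # r)) + oseg CL c (last (z # r)) x)"
    using Cons.IH[OF d] bd_otri[OF k, of c] oseg_anti[OF k(3), of c] by simp
  also have "\<dots> = oseg CL c x y + (oseg CL c y z + L2C CL c (plist (z # r))) + oseg CL c (last (z # r)) x"
    by (rule ab)
  finally show ?case by simp
qed

lemma plist_snoc: "xs \<noteq> [] \<Longrightarrow> plist (xs @ [w]) = plist xs @ [(1, (last xs, w))]"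
proof (induction xs rule: plist.induct)
  case (1 y z r) then show ?case by simp
qed auto

definition Dec :: "nat list \<Rightarrow> real \<Rightarrow> lab list \<Rightarrow> (real^3) set chain" where
  "Dec CL c cs = fan CL c (hd cs) (tl cs)"

lemma bd_Dec:
  assumes "distinct (map (lkey CL) cs)" "length cs \<ge> 2"
  shows "chain_boundary 2 (Dec CL c cs) = L2C CL c (plist (cs @ [hd cs]))"
proof -
  obtain x y ys where cs: "cs = x # y # ys" using assms(2)
    by (metis Suc_le_length_iff numeral_2_eq_2)
  have "plist (cs @ [hd cs]) = (1, (x, y)) # plist (y # ys) @ [(1, (last (y # ys), x))]"
    using plist_snoc[of "y # ys" x] cs by simp
  then show ?thesis using bd_fan[of CL x y ys c] assms(1) cs by (simp add: Dec_def add.assoc del: plist.simps)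
qed


definition coef :: "(int \<times> 'p) list \<Rightarrow> 'p \<Rightarrow> int" where
  "coef xs p = sum_list (map fst (filter (\<lambda>e. snd e = p) xs))"

lemma sum_coef:
  fixes g :: "'p \<Rightarrow> 'a chain"
  assumes "finite S" "set (map snd xs) \<subseteq> S"
  shows "sum_list (map (\<lambda>e. frag_cmul (fst e) (g (snd e))) xs) = (\<Sum>p\<in>S. frag_cmul (coef xs p) (g p))"
  using assms(2)
proof (induction xs)
  case Nil then show ?case by (simp add: coef_def)
next
  case (Cons e xs)
  have p0: "snd e \<in> S" using Cons.prems by auto
  have c: "coef (e # xs) p = (if snd e = p then fst e else 0) + coef xs p" for p
    by (simp add: coef_def)
  have "(\<Sum>p\<in>S. frag_cmul (coef (e # xs) p) (g p)) =
        (\<Sum>p\<in>S. frag_cmul (if snd e = p then fst e else 0) (g p)) + (\<Sum>p\<in>S. frag_cmul (coef xs p) (g p))"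
    by (simp add: c frag_cmul_distrib sum.distrib)
  also have "(\<Sum>p\<in>S. frag_cmul (if snd e = p then fst e else 0) (g p)) = frag_cmul (fst e) (g (snd e))"
  proof -
    have "(\<Sum>p\<in>S. frag_cmul (if snd e = p then fst e else 0) (g p)) = (\<Sum>p\<in>S. if snd e = p then frag_cmul (fst e) (g (snd e)) else 0)"
      by (rule sum.cong) auto
    also have "\<dots> = frag_cmul (fst e) (g (snd e))" using p0 assms(1) by (simp add: sum.delta)
    finally show ?thesis .
  qed
  finally show ?case using Cons by simp
qed

lemma L2C_eq_coef:
  assumes "list_all (\<lambda>p. coef xs p = coef ys p) (map snd (xs @ ys))"
  shows "L2C CL c xs = L2C CL c ys"
proof -
  let ?S = "set (map snd (xs @ ys))"
  let ?g = "\<lambda>p. oseg CL c (fst p) (snd p)"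
  have "L2C CL c xs = (\<Sum>p\<in>?S. frag_cmul (coef xs p) (?g p))"
    unfolding L2C_def by (rule sum_coef) auto
  also have "\<dots> = (\<Sum>p\<in>?S. frag_cmul (coef ys p) (?g p))"
    using assms by (intro sum.cong) (auto simp: list_all_iff)
  also have "\<dots> = L2C CL c ys"
    unfolding L2C_def by (rule sum_coef[symmetric]) auto
  finally show ?thesis .
qed

definition nlab :: "lab \<Rightarrow> lab" where "nlab a = (ng (fst a), ng (snd a))"

definition pcode :: "lab \<times> lab \<Rightarrow> int" where
  "pcode p = (int (fst (fst p)) * 20 + int (snd (fst p))) * 400 + int (fst (snd p)) * 20 + int (snd (snd p))"

definition orient :: "nat list \<Rightarrow> int \<times> (lab \<times> lab) \<Rightarrow> int \<times> (lab \<times> lab)" where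
  "orient CL e = (if lkey CL (fst (snd e)) < lkey CL (snd (snd e)) then e else (- fst e, (snd (snd e), fst (snd e))))"

definition flip :: "int \<times> (lab \<times> lab) \<Rightarrow> int \<times> (lab \<times> lab)" where
  "flip e = (let a = fst (snd e); b = snd (snd e) in
     if fst a = fst b \<and> pcode (nlab a, nlab b) < pcode (a, b) then (fst e, (nlab a, nlab b)) else e)"

definition nrm :: "nat list \<Rightarrow> int \<times> (lab \<times> lab) \<Rightarrow> int \<times> (lab \<times> lab)" where
  "nrm CL e = flip (orient CL e)"

definition arc_ok :: "nat list \<Rightarrow> lab \<Rightarrow> lab \<Rightarrow> bool" where
  "arc_ok CL a b = (fst a < 20 \<and> snd a < 20 \<and> snd b < 20 \<and> adjz (fst a) (snd a) \<and> adjz (fst a) (snd b)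
     \<and> (lkey CL a < lkey CL b \<longleftrightarrow> lkey CL (nlab a) < lkey CL (nlab b)) \<and> lkey CL (nlab a) \<noteq> lkey CL (nlab b))"

definition valid :: "nat list \<Rightarrow> int \<times> (lab \<times> lab) \<Rightarrow> bool" where
  "valid CL e = (lkey CL (fst (snd e)) \<noteq> lkey CL (snd (snd e)) \<and>
     (fst (fst (snd e)) = fst (snd (snd e)) \<longrightarrow> arc_ok CL (fst (snd e)) (snd (snd e))))"

lemma pt_nlab: "fst a < 20 \<Longrightarrow> snd a < 20 \<Longrightarrow> pt c (nlab a) = - pt c a"
  by (simp add: pt_def nlab_def vtx_ng algebra_simps)

lemma seg_neg:
  assumes "v \<in> dodec_vertices" "P \<bullet> v = c" "Q \<bullet> v = c"
  shows "seg_simplex c (- P) (- Q) = seg_simplex c P Q"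
  unfolding seg_simplex_def
proof (rule restrict_ext)
  fix s :: "nat \<Rightarrow> real"
  have "(P + s 1 *\<^sub>R (Q - P)) \<bullet> v = c" using assms by (simp add: inner_add_left inner_diff_left)
  then have "sigma_class c (P + s 1 *\<^sub>R (Q - P)) = sigma_class c (- (P + s 1 *\<^sub>R (Q - P)))"
    using class_neg[OF assms(1)] by blast
  moreover have "- P + s 1 *\<^sub>R (- Q - - P) = - (P + s 1 *\<^sub>R (Q - P))" by (simp add: algebra_simps)
  ultimately show "sigma_class c (- P + s 1 *\<^sub>R (- Q - - P)) = sigma_class c (P + s 1 *\<^sub>R (Q - P))" by simp
qed

lemma segL_arc:
  assumes "fst a < 20" "snd a < 20" "snd b < 20" "fst b = fst a" "adjz (fst a) (snd a)" "adjz (fst a) (snd b)"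
  shows "segL c (nlab a) (nlab b) = segL c a b"
proof -
  have "pt c a \<bullet> vtx (fst a) = c" using pt_dot_self[of "fst a" "snd a" c] assms by (cases a) auto
  moreover have "pt c b \<bullet> vtx (fst a) = c" using pt_dot_self[of "fst a" "snd b" c] assms by (cases b) auto
  moreover have "vtx (fst a) \<in> dodec_vertices" using assms by (simp add: V_eq)
  ultimately show ?thesis using assms
    by (simp add: segL_def pt_nlab seg_neg)
qed

lemma oseg_arc:
  assumes "arc_ok CL a b" "fst b = fst a"
  shows "oseg CL c (nlab a) (nlab b) = oseg CL c a b"
proof -
  have s1: "segL c (nlab a) (nlab b) = segL c a b"
    using assms by (intro segL_arc) (auto simp: arc_ok_def)
  have s2: "segL c (nlab b) (nlab a) = segL c b a"
    using assms by (intro segL_arc) (auto simp: arc_ok_def)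
  show ?thesis using assms(1) by (simp add: oseg_def s1 s2 arc_ok_def)
qed

lemma fc_neg: "frag_cmul (- k) (- x) = frag_cmul k x"
proof -
  have "frag_cmul (- k) (- x) = frag_cmul (- k) (frag_cmul (-1) x)" by simp
  also have "\<dots> = frag_cmul ((- k) * (-1)) x" by (rule frag_cmul_cmul)
  finally show ?thesis by simp
qed

lemma nrm_sound:
  assumes "valid CL e"
  shows "frag_cmul (fst (nrm CL e)) (oseg CL c (fst (snd (nrm CL e))) (snd (snd (nrm CL e))))
       = frag_cmul (fst e) (oseg CL c (fst (snd e)) (snd (snd e)))"
proof -
  obtain k a b where e: "e = (k, (a, b))" by (metis prod.collapse)
  have kab: "lkey CL a \<noteq> lkey CL b" using assms e by (simp add: valid_def)
  define o1 where "o1 = orient CL e"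
  have o1: "frag_cmul (fst o1) (oseg CL c (fst (snd o1)) (snd (snd o1))) = frag_cmul k (oseg CL c a b)"
    using kab oseg_anti[OF kab, of c] by (auto simp: o1_def orient_def e fc_neg)
  have o1v: "fst (fst (snd o1)) = fst (snd (snd o1)) \<Longrightarrow> arc_ok CL (fst (snd o1)) (snd (snd o1))"
  proof -
    assume "fst (fst (snd o1)) = fst (snd (snd o1))"
    then have "fst a = fst b" by (auto simp: o1_def orient_def e split: if_splits)
    then have ok: "arc_ok CL a b" using assms e by (simp add: valid_def)
    have "arc_ok CL b a" using ok \<open>fst a = fst b\<close> kab by (auto simp: arc_ok_def)
    then show ?thesis using ok by (auto simp: o1_def orient_def e)
  qed
  have "frag_cmul (fst (flip o1)) (oseg CL c (fst (snd (flip o1))) (snd (snd (flip o1))))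
      = frag_cmul (fst o1) (oseg CL c (fst (snd o1)) (snd (snd o1)))"
    using o1v oseg_arc[of CL "fst (snd o1)" "snd (snd o1)" c] by (auto simp: flip_def Let_def)
  then show ?thesis using o1 by (simp add: nrm_def o1_def e)
qed

lemma L2C_nrm: "list_all (valid CL) xs \<Longrightarrow> L2C CL c (map (nrm CL) xs) = L2C CL c xs"
  by (induction xs) (simp_all add: nrm_sound)


definition nbrs :: "nat \<Rightarrow> nat list" where "nbrs i = filter (adjz i) [0..<20]"

lemma adj_set: assumes "i < 20" shows "{w. dodec_adjacent (vtx i) w} = vtx ` set (nbrs i)"
proof -
  have vi: "vtx i \<in> dodec_vertices" using assms by (simp add: V_eq)
  have "dodec_adjacent (vtx i) w \<longleftrightarrow> (\<exists>j<20. w = vtx j \<and> adjz i j)" for w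
  proof
    assume "dodec_adjacent (vtx i) w"
    then obtain j where j: "j < 20" "w = vtx j" "vtx i \<bullet> vtx j = sqrt 5" by (auto simp: adj_iff V_eq)
    then show "\<exists>j<20. w = vtx j \<and> adjz i j" using dot_s5[OF assms j(1)] by (auto simp: adjz_def)
  next
    assume "\<exists>j<20. w = vtx j \<and> adjz i j"
    then obtain j where j: "j < 20" "w = vtx j" "adjz i j" by blast
    then show "dodec_adjacent (vtx i) w" using adjz_dot[OF assms j(1,3)] vi by (auto simp: adj_iff V_eq)
  qed
  then show ?thesis by (auto simp: nbrs_def image_iff)
qed

lemma vtx_inj_on: "inj_on vtx {..<20}"
  by (auto intro: inj_onI vtx_inj)

lemma bd_delta:
  assumes "dodec_adjacent v w"
  shows "chain_boundary 1 (delta c v w) = 0"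
proof -
  let ?t = "cut_frac c"
  have vv: "v \<bullet> v = 3" "w \<bullet> w = 3" "v \<bullet> w = sqrt 5" "w \<bullet> v = sqrt 5" "v \<in> dodec_vertices" "w \<in> dodec_vertices"
    using assms norm_sq_vtx by (auto simp: adj_iff inner_commute)
  have ct: "?t * (3 - sqrt 5) = 3 - c" using s5_bounds by (simp add: cut_frac_def)
  let ?P = "v + ?t *\<^sub>R (w - v)" and ?Q = "w + ?t *\<^sub>R (v - w)"
  have P: "?P \<bullet> v = c" using vv ct by (simp add: inner_add_left inner_diff_left algebra_simps)
  have Q: "?Q \<bullet> w = c" using vv ct by (simp add: inner_add_left inner_diff_left algebra_simps)
  have e1: "- v + ?t *\<^sub>R (- w - - v) = - ?P" by (simp add: algebra_simps)
  have e2: "- w + ?t *\<^sub>R (- v - - w) = - ?Q" by (simp add: algebra_simps)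
  have cP: "pt0 c (- ?P) = pt0 c ?P" using class_neg[OF vv(5) P] by (simp add: pt0_def)
  have cQ: "pt0 c (- ?Q) = pt0 c ?Q" using class_neg[OF vv(6) Q] by (simp add: pt0_def)
  have "delta c v w = frag_of (seg_simplex c ?P ?Q) - frag_of (seg_simplex c (- ?P) (- ?Q))"
    by (simp only: delta_def edge_cell_def e1 e2)
  then show ?thesis
    by (simp only: chain_boundary_diff bd_seg cP cQ) simp
qed

lemma bd_u_edge: "chain_boundary 1 (u_edge c E) = 0"
  unfolding u_edge_def chain_boundary_sum o_def
  by (intro sum.neutral ballI) (simp add: chain_boundary_sum o_def bd_delta[unfolded One_nat_def])

definition ulist :: "nat list \<Rightarrow> (int \<times> (lab \<times> lab)) list" where
  "ulist Es = concat (map (\<lambda>i. concat (map (\<lambda>j. [(1, ((i,j),(j,i))), (-1, ((ng i, ng j), (ng j, ng i)))]) (nbrs i))) Es)"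

definition edge_ok :: "nat list \<Rightarrow> nat list \<Rightarrow> bool" where
  "edge_ok CL Es = (distinct Es \<and> list_all (\<lambda>i. i < 20 \<and> list_all (\<lambda>j. lkey CL (i,j) < lkey CL (j,i)
      \<and> lkey CL (ng i, ng j) < lkey CL (ng j, ng i)) (nbrs i)) Es)"

lemma delta_oseg:
  assumes "i < 20" "j < 20" "lkey CL (i,j) < lkey CL (j,i)" "lkey CL (ng i, ng j) < lkey CL (ng j, ng i)"
  shows "delta c (vtx i) (vtx j) = oseg CL c (i,j) (j,i) - oseg CL c (ng i, ng j) (ng j, ng i)"
proof -
  have "edge_cell c (vtx i) (vtx j) = segL c (i,j) (j,i)" by (simp add: edge_cell_def segL_def pt_def)
  moreover have "edge_cell c (- vtx i) (- vtx j) = segL c (ng i, ng j) (ng j, ng i)"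
    unfolding edge_cell_def segL_def pt_def fst_conv snd_conv vtx_ng[OF assms(1)] vtx_ng[OF assms(2)] ..
  ultimately show ?thesis using assms by (simp add: delta_def oseg_def)
qed

lemma sum_delta_L2C:
  assumes "i < 20" "\<And>j. j \<in> set js \<Longrightarrow> j < 20 \<and> lkey CL (i,j) < lkey CL (j,i) \<and> lkey CL (ng i, ng j) < lkey CL (ng j, ng i)"
  shows "sum_list (map (\<lambda>j. delta c (vtx i) (vtx j)) js) = L2C CL c (concat (map (\<lambda>j. [(1, ((i,j),(j,i))), (-1, ((ng i, ng j), (ng j, ng i)))]) js))"
  using assms(2)
proof (induction js)
  case Nil then show ?case by simp
next
  case (Cons a js)
  have "delta c (vtx i) (vtx a) = oseg CL c (i,a) (a,i) - oseg CL c (ng i, ng a) (ng a, ng i)"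
    using Cons.prems[of a] assms(1) by (intro delta_oseg) auto
  then show ?case using Cons by simp
qed

lemma u_edge_L2C:
  assumes "edge_ok CL Es"
  shows "u_edge c (vtx ` set Es) = L2C CL c (ulist Es)"
proof -
  have Es: "distinct Es" "\<And>i. i \<in> set Es \<Longrightarrow> i < 20" using assms by (auto simp: edge_ok_def list_all_iff)
  have inj: "inj_on vtx (set Es)" using vtx_inj_on Es(2) by (meson inj_on_subset lessThan_iff subsetI)
  have inner: "(\<Sum>w\<in>{w. dodec_adjacent (vtx i) w}. delta c (vtx i) w) = L2C CL c (concat (map (\<lambda>j. [(1, ((i,j),(j,i))), (-1, ((ng i, ng j), (ng j, ng i)))]) (nbrs i)))"
    if i: "i \<in> set Es" for i
  proof -
    have i20: "i < 20" using Es(2) i .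
    have nb: "\<And>j. j \<in> set (nbrs i) \<Longrightarrow> j < 20 \<and> lkey CL (i,j) < lkey CL (j,i) \<and> lkey CL (ng i, ng j) < lkey CL (ng j, ng i)"
      using assms i by (auto simp: edge_ok_def list_all_iff nbrs_def)
    have injn: "inj_on vtx (set (nbrs i))" using vtx_inj_on nb by (meson inj_on_subset lessThan_iff subsetI)
    have "(\<Sum>w\<in>{w. dodec_adjacent (vtx i) w}. delta c (vtx i) w) = (\<Sum>j\<in>set (nbrs i). delta c (vtx i) (vtx j))"
      unfolding adj_set[OF i20] by (simp add: sum.reindex[OF injn])
    also have "\<dots> = sum_list (map (\<lambda>j. delta c (vtx i) (vtx j)) (nbrs i))"
      by (simp add: sum_list_distinct_conv_sum_set nbrs_def)
    also have "\<dots> = L2C CL c (concat (map (\<lambda>j. [(1, ((i,j),(j,i))), (-1, ((ng i, ng j), (ng j, ng i)))]) (nbrs i)))"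
      by (rule sum_delta_L2C[OF i20 nb])
    finally show ?thesis .
  qed
  have "u_edge c (vtx ` set Es) = (\<Sum>i\<in>set Es. \<Sum>w\<in>{w. dodec_adjacent (vtx i) w}. delta c (vtx i) w)"
    unfolding u_edge_def by (simp add: sum.reindex[OF inj])
  also have "\<dots> = sum_list (map (\<lambda>i. \<Sum>w\<in>{w. dodec_adjacent (vtx i) w}. delta c (vtx i) w) Es)"
    by (simp add: sum_list_distinct_conv_sum_set Es(1))
  also have "\<dots> = sum_list (map (\<lambda>i. L2C CL c (concat (map (\<lambda>j. [(1, ((i,j),(j,i))), (-1, ((ng i, ng j), (ng j, ng i)))]) (nbrs i)))) Es)"
    using inner by (intro arg_cong[where f=sum_list] map_cong) auto
  also have "\<dots> = L2C CL c (ulist Es)"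
    unfolding ulist_def by (induction Es) simp_all
  finally show ?thesis .
qed


definition corners :: "nat list \<Rightarrow> lab list" where
  "corners f = concat (map (\<lambda>k. [(f!k, f!((k+1) mod 5)), (f!((k+1) mod 5), f!k)]) [0..<5])"

definition corners_ok :: "nat list \<Rightarrow> bool" where
  "corners_ok f = list_all (\<lambda>a. fst a \<in> set f \<and> snd a \<in> set f \<and> fst a < 20 \<and> snd a < 20 \<and> adjz (fst a) (snd a)) (corners f)"

lemma FL_corners: "list_all corners_ok FL"
  unfolding FL_def corners_ok_def corners_def by code_simp

definition genuine :: "real \<Rightarrow> bool" where "genuine c = ((3 + sqrt 5)/2 < c \<and> c < 3)"

lemma pt_in:
  assumes "genuine c" "f \<in> set FL" "a \<in> set (corners f)"
  shows "pt c a \<in> Kf c f"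
proof -
  have "corners_ok f" using FL_corners assms(2) by (simp add: list_all_iff)
  then have "fst a \<in> set f \<and> snd a \<in> set f \<and> fst a < 20 \<and> snd a < 20 \<and> adjz (fst a) (snd a)"
    using assms(3) by (simp add: corners_ok_def list_all_iff)
  then show ?thesis using pt_Kf[of c "fst a" f "snd a"] assms(1) by (simp add: genuine_def)
qed

lemma segL_sing:
  assumes "genuine c" "f \<in> set FL" "a \<in> set (corners f)" "b \<in> set (corners f)"
  shows "singular_simplex 1 (Sigma_top c) (segL c a b)"
  unfolding segL_def using seg_singular[OF convex_Kf Kf_SH[OF assms(2)]] pt_in assms by blast

definition goodp :: "lab \<times> lab \<Rightarrow> bool" where
  "goodp p = list_ex (\<lambda>f. fst p \<in> set (corners f) \<and> snd p \<in> set (corners f)) FL"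

lemma oseg_sing:
  assumes "genuine c" "goodp (a,b)"
  shows "singular_chain 1 (Sigma_top c) (oseg CL c a b)"
proof -
  obtain f where f: "f \<in> set FL" "a \<in> set (corners f)" "b \<in> set (corners f)"
    using assms(2) by (auto simp: goodp_def list_ex_iff)
  show ?thesis using segL_sing[OF assms(1) f] segL_sing[OF assms(1) f(1,3,2)]
    by (auto simp: oseg_def singular_chain_of singular_chain_minus)
qed

lemma L2C_sing:
  assumes "genuine c" "list_all (\<lambda>e. goodp (snd e)) xs"
  shows "singular_chain 1 (Sigma_top c) (L2C CL c xs)"
  using assms(2)
proof (induction xs)
  case Nil then show ?case by simp
next
  case (Cons e xs)
  then show ?case using oseg_sing[OF assms(1), of "fst (snd e)" "snd (snd e)" CL]
    by (simp add: singular_chain_add singular_chain_cmul)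
qed

lemma triL_sing:
  assumes "genuine c" "f \<in> set FL" "a \<in> set (corners f)" "b \<in> set (corners f)" "d \<in> set (corners f)"
  shows "singular_chain 2 (Sigma_top c) (frag_of (triL c a b d))"
  unfolding triL_def singular_chain_of using tri_singular[OF convex_Kf Kf_SH[OF assms(2)]] pt_in assms by blast

lemma otri_sing:
  assumes "genuine c" "f \<in> set FL" "a \<in> set (corners f)" "b \<in> set (corners f)" "d \<in> set (corners f)"
  shows "singular_chain 2 (Sigma_top c) (otri CL c a b d)"
  using triL_sing[OF assms(1,2)] assms(3-5)
  by (simp add: otri_def Let_def singular_chain_minus)

lemma fan_sing:
  assumes "genuine c" "f \<in> set FL" "x \<in> set (corners f)" "set ys \<subseteq> set (corners f)"
  shows "singular_chain 2 (Sigma_top c) (fan CL c x ys)"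
  using assms(4)
proof (induction ys rule: induct_list012)
  case (3 y z r)
  have "singular_chain 2 (Sigma_top c) (otri CL c x y z)" using otri_sing[OF assms(1,2,3), of y z CL] "3.prems" by simp
  moreover have "singular_chain 2 (Sigma_top c) (fan CL c x (z # r))" using 3 by simp
  ultimately show ?case by (simp add: singular_chain_add)
qed auto

definition Dcert :: "nat list \<Rightarrow> real \<Rightarrow> (int \<times> nat) list \<Rightarrow> (real^3) set chain" where
  "Dcert CL c cert = sum_list (map (\<lambda>e. frag_cmul (fst e) (Dec CL c (corners (FL ! snd e)))) cert)"

definition bdlist :: "(int \<times> nat) list \<Rightarrow> (int \<times> (lab \<times> lab)) list" where
  "bdlist cert = concat (map (\<lambda>e. map (\<lambda>x. (fst e * fst x, snd x)) (plist (corners (FL ! snd e) @ [hd (corners (FL ! snd e))]))) cert)"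

lemma L2C_scale: "L2C CL c (map (\<lambda>x. (k * fst x, snd x)) xs) = frag_cmul k (L2C CL c xs)"
  by (induction xs) (simp_all add: frag_cmul_distrib2)

lemma len_FL: "length FL = 12" by (simp add: FL_def)
lemma upt5: "[0..<5] = [0,1,2,3,(4::nat)]" by code_simp
lemma len_corners: "length (corners f) = 10" by (simp add: corners_def upt5)

definition cert_faces_ok :: "nat list \<Rightarrow> (int \<times> nat) list \<Rightarrow> bool" where
  "cert_faces_ok CL cert = list_all (\<lambda>e. snd e < 12 \<and> distinct (map (lkey CL) (corners (FL ! snd e)))) cert"

lemma bd_Dcert:
  assumes "cert_faces_ok CL cert"
  shows "chain_boundary 2 (Dcert CL c cert) = L2C CL c (bdlist cert)"
  using assms
proof (induction cert)
  case Nil then show ?case by (simp add: Dcert_def bdlist_def)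
next
  case (Cons e cert)
  have d: "distinct (map (lkey CL) (corners (FL ! snd e)))" using Cons.prems by (simp add: cert_faces_ok_def)
  have "chain_boundary 2 (Dec CL c (corners (FL ! snd e))) = L2C CL c (plist (corners (FL ! snd e) @ [hd (corners (FL ! snd e))]))"
    using bd_Dec[OF d] len_corners by simp
  then show ?case using Cons by (simp add: Dcert_def bdlist_def chain_boundary_add chain_boundary_cmul L2C_scale cert_faces_ok_def)
qed

lemma Dcert_sing:
  assumes "genuine c" "cert_faces_ok CL cert"
  shows "singular_chain 2 (Sigma_top c) (Dcert CL c cert)"
  using assms(2)
proof (induction cert)
  case Nil then show ?case by (simp add: Dcert_def)
next
  case (Cons e cert)
  have f: "FL ! snd e \<in> set FL" using Cons.prems len_FL by (simp add: cert_faces_ok_def)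
  have cs: "corners (FL ! snd e) \<noteq> []" using len_corners by (metis list.size(3) zero_neq_numeral)
  have "singular_chain 2 (Sigma_top c) (Dec CL c (corners (FL ! snd e)))"
    unfolding Dec_def using fan_sing[OF assms(1) f] cs by (simp add: list.set_sel(1) list.set_sel(2) subsetI)
  then show ?case using Cons by (simp add: Dcert_def singular_chain_add singular_chain_cmul cert_faces_ok_def)
qed

definition cert_ok :: "nat list \<Rightarrow> nat list \<Rightarrow> (int \<times> nat) list \<Rightarrow> (int \<times> (lab \<times> lab)) list \<Rightarrow> bool" where
  "cert_ok CL Es cert zl = (edge_ok CL Es \<and> cert_faces_ok CL cert \<and> list_all (\<lambda>e. goodp (snd e)) zl \<and>
     (let U = ulist Es; R = bdlist cert @ map (\<lambda>x. (3 * fst x, snd x)) zl;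
          NU = map (nrm CL) U; NR = map (nrm CL) R in
      list_all (valid CL) (U @ R) \<and> list_all (\<lambda>p. coef NU p = coef NR p) (map snd (NU @ NR))))"

lemma cert_thm:
  assumes "cert_ok CL Es cert zl" "genuine c"
  shows "\<exists>z. singular_relcycle 1 (Sigma_top c) {} z \<and>
             homologous_rel 1 (Sigma_top c) {} (u_edge c (vtx ` set Es)) (frag_cmul 3 z)"
proof -
  let ?U = "ulist Es" and ?R = "bdlist cert @ map (\<lambda>x. (3 * fst x, snd x)) zl"
  let ?z = "L2C CL c zl" and ?D = "Dcert CL c cert"
  have ok: "edge_ok CL Es" "cert_faces_ok CL cert" "list_all (\<lambda>e. goodp (snd e)) zl"
    "list_all (valid CL) ?U" "list_all (valid CL) ?R"
    "list_all (\<lambda>p. coef (map (nrm CL) ?U) p = coef (map (nrm CL) ?R) p) (map snd (map (nrm CL) ?U @ map (nrm CL) ?R))"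
  proof -
    have A: "edge_ok CL Es \<and> cert_faces_ok CL cert \<and> list_all (\<lambda>e. goodp (snd e)) zl \<and>
      list_all (valid CL) (?U @ ?R) \<and> list_all (\<lambda>p. coef (map (nrm CL) ?U) p = coef (map (nrm CL) ?R) p) (map snd (map (nrm CL) ?U @ map (nrm CL) ?R))"
      using assms(1) unfolding cert_ok_def Let_def by blast
    then show "edge_ok CL Es" "cert_faces_ok CL cert" "list_all (\<lambda>e. goodp (snd e)) zl"
      "list_all (valid CL) ?U" "list_all (valid CL) ?R"
      "list_all (\<lambda>p. coef (map (nrm CL) ?U) p = coef (map (nrm CL) ?R) p) (map snd (map (nrm CL) ?U @ map (nrm CL) ?R))"
      by (simp_all only: list_all_append)
  qed
  have "u_edge c (vtx ` set Es) = L2C CL c ?U" by (rule u_edge_L2C[OF ok(1)])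
  also have "\<dots> = L2C CL c (map (nrm CL) ?U)" by (rule L2C_nrm[OF ok(4), symmetric])
  also have "\<dots> = L2C CL c (map (nrm CL) ?R)" by (rule L2C_eq_coef[OF ok(6)])
  also have "\<dots> = L2C CL c ?R" by (rule L2C_nrm[OF ok(5)])
  also have "\<dots> = chain_boundary 2 ?D + frag_cmul 3 ?z" by (simp add: L2C_scale bd_Dcert[OF ok(2)])
  finally have ueq: "u_edge c (vtx ` set Es) = chain_boundary 2 ?D + frag_cmul 3 ?z" .
  have Ds: "singular_chain 2 (Sigma_top c) ?D" by (rule Dcert_sing[OF assms(2) ok(2)])
  have zs: "singular_chain 1 (Sigma_top c) ?z" by (rule L2C_sing[OF assms(2) ok(3)])
  have "chain_boundary 1 (chain_boundary 2 ?D) = 0" using chain_boundary_boundary[OF Ds] by simp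
  then have "frag_cmul 3 (chain_boundary 1 ?z) = 0"
    using bd_u_edge[of c "vtx ` set Es"] ueq by (simp add: chain_boundary_add chain_boundary_cmul)
  then have bz: "chain_boundary 1 ?z = 0" by simp
  have "singular_relcycle 1 (Sigma_top c) {} ?z" using zs bz by (simp add: singular_cycle)
  moreover have "homologous_rel 1 (Sigma_top c) {} (u_edge c (vtx ` set Es)) (frag_cmul 3 ?z)"
    unfolding homologous_rel_def singular_boundary using Ds ueq by (intro exI[of _ ?D]) (simp add: numeral_2_eq_2)
  ultimately show ?thesis by blast
qed


lemma s5_tight: "2.2 < sqrt (5::real)" "sqrt 5 < 2.3"
proof -
  show "2.2 < sqrt (5::real)" by (rule real_less_rsqrt) (simp add: power2_eq_square)
  show "sqrt 5 < (2.3::real)" by (rule real_less_lsqrt) (simp_all add: power2_eq_square)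
qed

lemma Dset: assumes "u \<in> dodec_vertices" "v \<in> dodec_vertices" "u \<noteq> v"
  shows "u \<bullet> v \<in> {sqrt 5, 1, -1, - sqrt 5, -3}"
proof -
  obtain i j where ij: "i < 20" "j < 20" "u = vtx i" "v = vtx j" using assms by (auto simp: V_eq)
  then have "i \<noteq> j" using assms by auto
  from dot_vals[OF ij(1,2) this] show ?thesis using ij by (auto simp: vtx_def vec3_inner zr_def)
qed

lemma dot_m3: assumes "u \<in> dodec_vertices" "v \<in> dodec_vertices" "u \<bullet> v = -3" shows "v = - u"
proof -
  have "(u + v) \<bullet> (u + v) = 0"
    using assms norm_sq_vtx[OF assms(1)] norm_sq_vtx[OF assms(2)] by (simp add: inner_add_left inner_add_right inner_commute)
  then show ?thesis by (simp add: add_eq_0_iff)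
qed

lemma dist_sq_V: assumes "u \<in> dodec_vertices" "v \<in> dodec_vertices"
  shows "(dist u v)^2 = 6 - 2 * (u \<bullet> v)"
  using norm_sq_vtx[OF assms(1)] norm_sq_vtx[OF assms(2)]
  by (simp add: dist_norm power2_norm_eq_inner inner_diff_left inner_diff_right inner_commute)

definition cpt :: "real^3 \<Rightarrow> real^3 \<Rightarrow> real^3 \<Rightarrow> real^3 \<Rightarrow> real \<Rightarrow> real \<Rightarrow> real \<Rightarrow> real^3" where
  "cpt m u1 u2 u3 a1 a2 a3 = m + a1 *\<^sub>R u1 + a2 *\<^sub>R u2 + a3 *\<^sub>R u3"

lemma cpt_dist:
  assumes "u1 \<bullet> u2 = 0" "u1 \<bullet> u3 = 0" "u2 \<bullet> u3 = 0" "u2 \<bullet> u2 = r" "u3 \<bullet> u3 = r" "u1 \<bullet> u1 = r"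
  shows "(dist (cpt m u1 u2 u3 a1 a2 a3) (cpt m u1 u2 u3 b1 b2 b3))^2 = ((a1-b1)^2 + (a2-b2)^2 + (a3-b3)^2) * r"
proof -
  have "cpt m u1 u2 u3 a1 a2 a3 - cpt m u1 u2 u3 b1 b2 b3 = (a1-b1) *\<^sub>R u1 + (a2-b2) *\<^sub>R u2 + (a3-b3) *\<^sub>R u3"
    by (simp add: cpt_def algebra_simps)
  moreover have "\<And>x y z. (x *\<^sub>R u1 + y *\<^sub>R u2 + z *\<^sub>R u3) \<bullet> (x *\<^sub>R u1 + y *\<^sub>R u2 + z *\<^sub>R u3) = (x^2 + y^2 + z^2) * r"
    using assms by (simp add: inner_add_left inner_add_right inner_commute power2_eq_square algebra_simps)
  ultimately show ?thesis by (simp add: dist_norm power2_norm_eq_inner)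
qed

lemma sq_diff_pm: "a \<in> {-1,1::real} \<Longrightarrow> b \<in> {-1,1} \<Longrightarrow> (a-b)^2 \<in> {0,4}"
  by auto

lemma E_pairwise:
  assumes e: "e \<in> inscribed_cubes" and E: "E \<subseteq> e" "card E = 4" "\<forall>x\<in>E. \<forall>y\<in>E. \<not> cube_adjacent e x y"
  shows "E \<subseteq> dodec_vertices" "\<forall>x\<in>E. \<forall>y\<in>E. x \<noteq> y \<longrightarrow> x \<bullet> y = -1"
proof -
  have eV: "e \<subseteq> dodec_vertices" using e by (simp add: inscribed_cubes_def)
  then show "E \<subseteq> dodec_vertices" using E by auto
  obtain m u1 u2 u3 where cu: "u1 \<noteq> 0" "norm u2 = norm u1" "norm u3 = norm u1"
      "u1 \<bullet> u2 = 0" "u1 \<bullet> u3 = 0" "u2 \<bullet> u3 = 0"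
      and eeq: "e = {m + e1 *\<^sub>R u1 + e2 *\<^sub>R u2 + e3 *\<^sub>R u3 | e1 e2 e3. e1 \<in> {-1,1} \<and> e2 \<in> {-1,1} \<and> e3 \<in> {-1,1}}"
    using e by (auto simp: inscribed_cubes_def is_cube_def)
  define r where "r = u1 \<bullet> u1"
  have r: "u1 \<bullet> u1 = r" "u2 \<bullet> u2 = r" "u3 \<bullet> u3 = r" "r > 0"
    using cu by (auto simp: r_def power2_norm_eq_inner[symmetric])
  note cd = cpt_dist[OF cu(4,5,6) r(2,3,1), of m]
  have ein: "cpt m u1 u2 u3 a1 a2 a3 \<in> e" if "a1 \<in> {-1,1}" "a2 \<in> {-1,1}" "a3 \<in> {-1,1}" for a1 a2 a3
    unfolding eeq cpt_def using that by blast
  have eform: "\<exists>a1 a2 a3. a1 \<in> {-1,1} \<and> a2 \<in> {-1,1} \<and> a3 \<in> {-1,1} \<and> x = cpt m u1 u2 u3 a1 a2 a3" if "x \<in> e" for x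
    using that unfolding eeq cpt_def by blast
  let ?x = "cpt m u1 u2 u3 1 1 1" and ?z = "cpt m u1 u2 u3 (-1) 1 1" and ?w = "cpt m u1 u2 u3 (-1) (-1) (-1)"
  have xV: "?x \<in> dodec_vertices" "?z \<in> dodec_vertices" "?w \<in> dodec_vertices" using ein eV by auto
  have dz: "(dist ?x ?z)^2 = 4 * r" using cd by simp
  have dw: "(dist ?x ?w)^2 = 12 * r" using cd by simp
  have "?x \<noteq> ?z" "?x \<noteq> ?w" using dz dw r(4) by auto
  then have "?x \<bullet> ?z \<in> {sqrt 5, 1, -1, - sqrt 5, -3}" "?x \<bullet> ?w \<in> {sqrt 5, 1, -1, - sqrt 5, -3}"
    using Dset xV by auto
  moreover have "?x \<bullet> ?z = 3 - 2 * r" "?x \<bullet> ?w = 3 - 6 * r"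
    using dist_sq_V[OF xV(1,2)] dist_sq_V[OF xV(1,3)] dz dw by auto
  ultimately have r1: "r = 1" using s5_tight by auto
  have dcube: "(dist x y)^2 \<in> {0, 4, 8, 12}" if xe: "x \<in> e" and ye: "y \<in> e" for x y
  proof -
    obtain a1 a2 a3 where a: "a1 \<in> {-1,1}" "a2 \<in> {-1,1}" "a3 \<in> {-1,1}" "x = cpt m u1 u2 u3 a1 a2 a3"
      using eform[OF xe] by blast
    obtain b1 b2 b3 where b: "b1 \<in> {-1,1}" "b2 \<in> {-1,1}" "b3 \<in> {-1,1}" "y = cpt m u1 u2 u3 b1 b2 b3"
      using eform[OF ye] by blast
    have "(dist x y)^2 = (a1-b1)^2 + (a2-b2)^2 + (a3-b3)^2" using a b cd r1 by simp
    moreover have "(a1-b1)^2 \<in> {0,4}" "(a2-b2)^2 \<in> {0,4}" "(a3-b3)^2 \<in> {0,4}"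
      using a b sq_diff_pm by auto
    ultimately show ?thesis by auto
  qed
  have pair: "x \<bullet> y \<in> {-1, -3}" if xyE: "x \<in> E" "y \<in> E" "x \<noteq> y" for x y
  proof -
    have xy: "x \<in> e" "y \<in> e" using xyE E by auto
    have "\<not> cube_adjacent e x y" using E(3) xyE by auto
    then obtain z where z: "z \<in> e" "z \<noteq> x" "dist x z < dist x y"
      using xy xyE(3) unfolding cube_adjacent_def by (auto simp: not_le)
    have "(dist x z)^2 \<in> {0, 4, 8, 12}" using dcube[OF xy(1) z(1)] .
    moreover have "dist x z \<noteq> 0" using z(2) by simp
    ultimately have "(dist x z)^2 \<ge> 4" by auto
    moreover have "(dist x z)^2 < (dist x y)^2" using z(3) by (simp add: power_strict_mono)
    ultimately have "(dist x y)^2 \<in> {8, 12}" using dcube[OF xy] by auto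
    moreover have "x \<in> dodec_vertices" "y \<in> dodec_vertices" using xy eV by auto
    ultimately show ?thesis using dist_sq_V[of x y] by auto
  qed
  show "\<forall>x\<in>E. \<forall>y\<in>E. x \<noteq> y \<longrightarrow> x \<bullet> y = -1"
  proof (intro ballI impI, rule ccontr)
    fix x y assume xy: "x \<in> E" "y \<in> E" "x \<noteq> y" "x \<bullet> y \<noteq> -1"
    then have "x \<bullet> y = -3" using pair by auto
    moreover have "x \<in> dodec_vertices" "y \<in> dodec_vertices" using xy E eV by auto
    ultimately have yx: "y = - x" using dot_m3 by blast
    have "card (E - {x, y}) = 2" using E(2) xy by (simp add: card_Diff_subset)
    then have "E - {x, y} \<noteq> {}" by (metis card.empty zero_neq_numeral)
    then obtain z where z: "z \<in> E" "z \<noteq> x" "z \<noteq> y" by blast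
    have "z \<bullet> x \<in> {-1,-3}" "z \<bullet> y \<in> {-1,-3}" using pair z xy by auto
    then show False using yx by auto
  qed
qed

definition MT :: "nat list list" where
  "MT = [[3, 5, 6, 11, 12, 16], [2, 4, 7, 8, 12, 19], [1, 4, 7, 9, 16, 17], [0, 5, 6, 9, 14, 19], [1, 2, 7, 10, 11, 18], [0, 3, 6, 8, 13, 18], [0, 3, 5, 10, 15, 17], [1, 2, 4, 13, 14, 15], [1, 5, 12, 13, 18, 19], [2, 3, 14, 16, 17, 19], [4, 6, 11, 15, 17, 18], [0, 4, 10, 12, 16, 18], [0, 1, 8, 11, 16, 19], [5, 7, 8, 14, 15, 18], [3, 7, 9, 13, 15, 19], [6, 7, 10, 13, 14, 17], [0, 2, 9, 11, 12, 17], [2, 6, 9, 10, 15, 16], [4, 5, 8, 10, 11, 13], [1, 3, 8, 9, 12, 14]]"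

definition TL :: "nat list list" where
  "TL = [[0, 3, 5, 6], [0, 11, 12, 16], [1, 2, 4, 7], [1, 8, 12, 19], [2, 9, 16, 17], [3, 9, 14, 19], [4, 10, 11, 18], [5, 8, 13, 18], [6, 10, 15, 17], [7, 13, 14, 15]]"

lemma MT_ok: "list_all (\<lambda>i. MT!i = filter (\<lambda>j. zdot (VL!i) (VL!j) = (-4,0)) [0..<20]) [0..<20]"
  by code_simp

lemma tet_ok: "list_all (\<lambda>i. list_all (\<lambda>j. sort (i # j # filter (\<lambda>k. k \<in> set (MT!j)) (MT!i)) \<in> set TL) (MT!i)) [0..<20]"
  by code_simp

lemma TL_ok: "list_all (\<lambda>Es. distinct Es \<and> length Es = 4 \<and> list_all (\<lambda>i. i < 20) Es) TL"
  by code_simp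

lemma m1_code: assumes "i < 20" "j < 20" "i \<noteq> j" "vtx i \<bullet> vtx j = -1"
  shows "j \<in> set (MT!i)"
proof -
  have "zdot (VL!i) (VL!j) = (-4,0)"
    using dot_vals[OF assms(1-3)] assms(4) s5_bounds by (auto simp: vtx_def vec3_inner zr_def)
  then show ?thesis using list_all_upt[OF MT_ok assms(1)] assms(2) by simp
qed

lemma classify:
  assumes "E \<subseteq> dodec_vertices" "card E = 4" "\<forall>x\<in>E. \<forall>y\<in>E. x \<noteq> y \<longrightarrow> x \<bullet> y = -1"
  shows "\<exists>Es\<in>set TL. E = vtx ` set Es"
proof -
  have "E \<noteq> {}" using assms(2) by auto
  then obtain x where x: "x \<in> E" by blast
  have "E - {x} \<noteq> {}" using assms(2) x by (metis card.empty card_Diff_singleton diff_Suc_1 numeral_eq_Suc pred_numeral_simps(2) zero_neq_numeral card.infinite)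
  then obtain y where y: "y \<in> E" "y \<noteq> x" by blast
  obtain i where i: "i < 20" "x = vtx i" using x assms(1) by (auto simp: V_eq)
  obtain j where j: "j < 20" "y = vtx j" using y assms(1) by (auto simp: V_eq)
  have ij: "i \<noteq> j" using i j y by auto
  have jM: "j \<in> set (MT!i)" using m1_code[OF i(1) j(1) ij] assms(3) x y i j by auto
  let ?T = "i # j # filter (\<lambda>k. k \<in> set (MT!j)) (MT!i)"
  have "sort ?T \<in> set TL" using list_all_upt[OF tet_ok i(1)] jM by (simp add: list_all_iff)
  then obtain Es where Es: "Es \<in> set TL" "set Es = set ?T" by (metis set_sort)
  have sub: "E \<subseteq> vtx ` set Es"
  proof
    fix z assume z: "z \<in> E"
    obtain k where k: "k < 20" "z = vtx k" using z assms(1) by (auto simp: V_eq)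
    show "z \<in> vtx ` set Es"
    proof (cases "k = i \<or> k = j")
      case True then show ?thesis using Es k i j by auto
    next
      case False
      have "vtx i \<noteq> vtx k" "vtx j \<noteq> vtx k" using vtx_inj i(1) j(1) k(1) False by metis+
      then have "vtx i \<bullet> vtx k = -1" "vtx j \<bullet> vtx k = -1" using assms(3) x y z i j k by auto
      then have "k \<in> set (MT!i)" "k \<in> set (MT!j)" using m1_code i j k False by auto
      then show ?thesis using Es k by auto
    qed
  qed
  have EsOk: "distinct Es" "length Es = 4" "\<forall>i\<in>set Es. i < 20" using TL_ok Es(1) by (auto simp: list_all_iff)
  have "inj_on vtx (set Es)" using vtx_inj_on EsOk(3) by (meson inj_on_subset lessThan_iff subsetI)
  then have "card (vtx ` set Es) = 4" using EsOk by (simp add: card_image distinct_card)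
  then have "E = vtx ` set Es" using sub assms(2) by (metis card_subset_eq finite_imageI finite_set)
  then show ?thesis using Es(1) by blast
qed


lemma adj_neg: "dodec_adjacent (- v) (- w) \<longleftrightarrow> dodec_adjacent v w"
proof -
  have "(- v) \<in> dodec_vertices \<longleftrightarrow> v \<in> dodec_vertices" for v
    by (metis V_neg image_iff minus_minus)
  then show ?thesis by (simp add: adj_iff)
qed

lemma u_edge_neg: "u_edge c (uminus ` E) = - u_edge c E"
proof -
  have inj: "inj_on uminus A" for A :: "(real^3) set" by (auto intro: inj_onI)
  have adjset: "{w. dodec_adjacent (- y) w} = uminus ` {u. dodec_adjacent y u}" for y
  proof -
    have key: "w \<in> uminus ` {u. dodec_adjacent y u} \<longleftrightarrow> dodec_adjacent (- y) w" for w
    proof -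
      have a: "dodec_adjacent (- y) w \<longleftrightarrow> dodec_adjacent y (- w)"
        using adj_neg[of y "- w"] by simp
      show ?thesis
      proof
        assume "w \<in> uminus ` {u. dodec_adjacent y u}"
        then obtain u where "dodec_adjacent y u" "w = - u" by blast
        then show "dodec_adjacent (- y) w" using a by simp
      next
        assume "dodec_adjacent (- y) w"
        then show "w \<in> uminus ` {u. dodec_adjacent y u}" using a by (intro image_eqI[where x="- w"]) auto
      qed
    qed
    show ?thesis by (simp add: set_eq_iff key)
  qed
  have dneg: "delta c (- y) (- u) = - delta c y u" for y u
    by (simp add: delta_def)
  have "u_edge c (uminus ` E) = (\<Sum>y\<in>E. \<Sum>w\<in>{w. dodec_adjacent (- y) w}. delta c (- y) w)"
    unfolding u_edge_def by (simp add: sum.reindex[OF inj])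
  also have "\<dots> = (\<Sum>y\<in>E. \<Sum>u\<in>{u. dodec_adjacent y u}. delta c (- y) (- u))"
    unfolding adjset by (simp add: sum.reindex[OF inj])
  also have "\<dots> = - u_edge c E"
    unfolding u_edge_def dneg by (simp add: sum_negf)
  finally show ?thesis .
qed

lemma neg_transfer:
  assumes "\<exists>z. singular_relcycle 1 X {} z \<and> homologous_rel 1 X {} u (frag_cmul 3 z)"
  shows "\<exists>z. singular_relcycle 1 X {} z \<and> homologous_rel 1 X {} (- u) (frag_cmul 3 z)"
proof -
  obtain z where z: "singular_relcycle 1 X {} z" "homologous_rel 1 X {} u (frag_cmul 3 z)" using assms by blast
  have "singular_relcycle 1 X {} (- z)" using z(1) by (simp add: singular_relcycle_minus)
  moreover have "frag_cmul 3 (- z) = - frag_cmul 3 z"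
  proof -
    have "frag_cmul 3 (- z) + frag_cmul 3 z = frag_cmul 3 (- z + z)" by (simp only: frag_cmul_distrib2)
    then have "frag_cmul 3 (- z) + frag_cmul 3 z = 0" by simp
    then show ?thesis by (rule eq_neg_iff_add_eq_0[THEN iffD2])
  qed
  moreover have "homologous_rel 1 X {} (- u) (- frag_cmul 3 z)"
  proof -
    have eq: "- u - - frag_cmul 3 z = - (u - frag_cmul 3 z)" by (rule minus_diff_minus)
    have "singular_relboundary 1 X {} (- (u - frag_cmul 3 z))"
      using z(2) singular_relboundary_minus unfolding homologous_rel_def by blast
    then show ?thesis unfolding homologous_rel_def eq .
  qed
  ultimately show ?thesis by metis
qed

lemma vtx_neg_set: assumes "set Es' = set (map ng Es)" "list_all (\<lambda>i. i < 20) Es"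
  shows "vtx ` set Es' = uminus ` vtx ` set Es"
proof -
  have "vtx ` set Es' = vtx ` ng ` set Es" using assms(1) by simp
  also have "\<dots> = (\<lambda>i. - vtx i) ` set Es" unfolding image_image using assms(2) vtx_ng
    by (intro image_cong) (auto simp: list_all_iff)
  also have "\<dots> = uminus ` vtx ` set Es" by (simp add: image_image)
  finally show ?thesis .
qed

lemma degenerate_case:
  assumes "c \<le> (3 + sqrt 5) / 2"
  shows "\<exists>z. singular_relcycle 1 (Sigma_top c) {} z \<and>
             homologous_rel 1 (Sigma_top c) {} (u_edge c E) (frag_cmul 3 z)"
  by (rule exI[of _ 0]) (simp add: u_edge_zero[OF assms])


lemma cert0: "cert_ok [0, 1, 2, 3, 4, 5, 6, 7] [0, 3, 5, 6] [(-1,0), (1,1), (-1,2), (1,4), (1,5), (1,8), (-1,9), (-1,10)] [(1,((0,10),(10,0))), (-1,((1,13),(13,1))), (-1,((2,10),(10,2))), (1,((3,13),(13,3))), (-1,((4,16),(16,4))), (1,((5,19),(19,5))), (1,((6,16),(16,6))), (-1,((7,19),(19,7)))]"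
  by code_simp

lemma res0: "genuine c \<Longrightarrow> \<exists>z. singular_relcycle 1 (Sigma_top c) {} z \<and>
    homologous_rel 1 (Sigma_top c) {} (u_edge c (vtx ` set [0, 3, 5, 6])) (frag_cmul 3 z)"
  by (rule cert_thm[OF cert0])

lemma res2: "genuine c \<Longrightarrow> \<exists>z. singular_relcycle 1 (Sigma_top c) {} z \<and>
    homologous_rel 1 (Sigma_top c) {} (u_edge c (vtx ` set [1, 2, 4, 7])) (frag_cmul 3 z)"
proof -
  assume g: "genuine c"
  have eq: "vtx ` set [1, 2, 4, 7] = uminus ` vtx ` set [0, 3, 5, 6]"
    by (rule vtx_neg_set) (auto simp: ng_def NG_def)
  have u: "u_edge c (vtx ` set [1, 2, 4, 7]) = - u_edge c (vtx ` set [0, 3, 5, 6])"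
    unfolding eq by (rule u_edge_neg)
  show ?thesis unfolding u by (rule neg_transfer[OF res0[OF g]])
qed

lemma cert1: "cert_ok [0, 7, 11, 12, 13, 14, 15, 16] [0, 11, 12, 16] [(1,0), (1,2), (1,4), (-1,6), (-1,7), (1,8), (-1,9), (-1,10)] [(1,((0,8),(8,0))), (-1,((7,17),(17,7))), (1,((11,17),(17,11))), (1,((12,3),(3,12))), (-1,((13,3),(3,13))), (-1,((14,8),(8,14))), (-1,((15,4),(4,15))), (1,((16,4),(4,16)))]"
  by code_simp

lemma res1: "genuine c \<Longrightarrow> \<exists>z. singular_relcycle 1 (Sigma_top c) {} z \<and>
    homologous_rel 1 (Sigma_top c) {} (u_edge c (vtx ` set [0, 11, 12, 16])) (frag_cmul 3 z)"
  by (rule cert_thm[OF cert1])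

lemma res9: "genuine c \<Longrightarrow> \<exists>z. singular_relcycle 1 (Sigma_top c) {} z \<and>
    homologous_rel 1 (Sigma_top c) {} (u_edge c (vtx ` set [7, 13, 14, 15])) (frag_cmul 3 z)"
proof -
  assume g: "genuine c"
  have eq: "vtx ` set [7, 13, 14, 15] = uminus ` vtx ` set [0, 11, 12, 16]"
    by (rule vtx_neg_set) (auto simp: ng_def NG_def)
  have u: "u_edge c (vtx ` set [7, 13, 14, 15]) = - u_edge c (vtx ` set [0, 11, 12, 16])"
    unfolding eq by (rule u_edge_neg)
  show ?thesis unfolding u by (rule neg_transfer[OF res1[OF g]])
qed

lemma cert3: "cert_ok [1, 6, 8, 10, 12, 15, 17, 19] [1, 8, 12, 19] [(-1,1), (1,4), (-1,5), (-1,6), (-1,7), (1,8), (1,9), (1,10)] [(1,((1,13),(13,1))), (-1,((6,16),(16,6))), (1,((8,4),(4,8))), (-1,((10,13),(13,10))), (1,((12,3),(3,12))), (-1,((15,4),(4,15))), (-1,((17,3),(3,17))), (1,((19,16),(16,19)))]"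
  by code_simp

lemma res3: "genuine c \<Longrightarrow> \<exists>z. singular_relcycle 1 (Sigma_top c) {} z \<and>
    homologous_rel 1 (Sigma_top c) {} (u_edge c (vtx ` set [1, 8, 12, 19])) (frag_cmul 3 z)"
  by (rule cert_thm[OF cert3])

lemma res8: "genuine c \<Longrightarrow> \<exists>z. singular_relcycle 1 (Sigma_top c) {} z \<and>
    homologous_rel 1 (Sigma_top c) {} (u_edge c (vtx ` set [6, 10, 15, 17])) (frag_cmul 3 z)"
proof -
  assume g: "genuine c"
  have eq: "vtx ` set [6, 10, 15, 17] = uminus ` vtx ` set [1, 8, 12, 19]"
    by (rule vtx_neg_set) (auto simp: ng_def NG_def)
  have u: "u_edge c (vtx ` set [6, 10, 15, 17]) = - u_edge c (vtx ` set [1, 8, 12, 19])"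
    unfolding eq by (rule u_edge_neg)
  show ?thesis unfolding u by (rule neg_transfer[OF res3[OF g]])
qed

lemma cert4: "cert_ok [2, 5, 8, 9, 13, 16, 17, 18] [2, 9, 16, 17] [(1,0), (1,1), (1,2), (-1,4), (1,5), (-1,6), (-1,7), (-1,8)] [(1,((2,10),(10,2))), (-1,((5,19),(19,5))), (-1,((8,0),(0,8))), (1,((9,0),(0,9))), (-1,((13,10),(10,13))), (1,((16,19),(19,16))), (1,((17,7),(7,17))), (-1,((18,7),(7,18)))]"
  by code_simp

lemma res4: "genuine c \<Longrightarrow> \<exists>z. singular_relcycle 1 (Sigma_top c) {} z \<and>
    homologous_rel 1 (Sigma_top c) {} (u_edge c (vtx ` set [2, 9, 16, 17])) (frag_cmul 3 z)"
  by (rule cert_thm[OF cert4])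

lemma res7: "genuine c \<Longrightarrow> \<exists>z. singular_relcycle 1 (Sigma_top c) {} z \<and>
    homologous_rel 1 (Sigma_top c) {} (u_edge c (vtx ` set [5, 8, 13, 18])) (frag_cmul 3 z)"
proof -
  assume g: "genuine c"
  have eq: "vtx ` set [5, 8, 13, 18] = uminus ` vtx ` set [2, 9, 16, 17]"
    by (rule vtx_neg_set) (auto simp: ng_def NG_def)
  have u: "u_edge c (vtx ` set [5, 8, 13, 18]) = - u_edge c (vtx ` set [2, 9, 16, 17])"
    unfolding eq by (rule u_edge_neg)
  show ?thesis unfolding u by (rule neg_transfer[OF res4[OF g]])
qed

lemma cert5: "cert_ok [3, 4, 9, 10, 11, 14, 18, 19] [3, 9, 14, 19] [(-1,0), (1,1), (-1,2), (1,5), (-1,6), (-1,7), (1,9), (1,10)] [(1,((3,17),(17,3))), (-1,((4,8),(8,4))), (1,((9,0),(0,9))), (-1,((10,0),(0,10))), (-1,((11,17),(17,11))), (1,((14,8),(8,14))), (-1,((18,7),(7,18))), (1,((19,7),(7,19)))]"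
  by code_simp

lemma res5: "genuine c \<Longrightarrow> \<exists>z. singular_relcycle 1 (Sigma_top c) {} z \<and>
    homologous_rel 1 (Sigma_top c) {} (u_edge c (vtx ` set [3, 9, 14, 19])) (frag_cmul 3 z)"
  by (rule cert_thm[OF cert5])

lemma res6: "genuine c \<Longrightarrow> \<exists>z. singular_relcycle 1 (Sigma_top c) {} z \<and>
    homologous_rel 1 (Sigma_top c) {} (u_edge c (vtx ` set [4, 10, 11, 18])) (frag_cmul 3 z)"
proof -
  assume g: "genuine c"
  have eq: "vtx ` set [4, 10, 11, 18] = uminus ` vtx ` set [3, 9, 14, 19]"
    by (rule vtx_neg_set) (auto simp: ng_def NG_def)
  have u: "u_edge c (vtx ` set [4, 10, 11, 18]) = - u_edge c (vtx ` set [3, 9, 14, 19])"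
    unfolding eq by (rule u_edge_neg)
  show ?thesis unfolding u by (rule neg_transfer[OF res5[OF g]])
qed

theorem corollary3p8:
  fixes c :: real and e E :: "(real^3) set"
  assumes "sqrt 5 < c" and "c < 3"
    and "e \<in> inscribed_cubes"
    and "E \<subseteq> e" and "card E = 4" and "\<forall>x\<in>E. \<forall>y\<in>E. \<not> cube_adjacent e x y"
  shows "\<exists>z. singular_relcycle 1 (Sigma_top c) {} z \<and>
             homologous_rel 1 (Sigma_top c) {} (u_edge c E) (frag_cmul 3 z)"
proof (cases "c \<le> (3 + sqrt 5) / 2")
  case True
  then show ?thesis by (rule degenerate_case)
next
  case False
  then have g: "genuine c" using assms(2) by (simp add: genuine_def)
  note EP = E_pairwise[OF assms(3-6)]
  obtain Es where Es: "Es \<in> set TL" "E = vtx ` set Es"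
    using classify[OF EP(1) assms(5) EP(2)] by blast
  from Es(1) have "Es = [0, 3, 5, 6] \<or> Es = [0, 11, 12, 16] \<or> Es = [1, 2, 4, 7] \<or> Es = [1, 8, 12, 19] \<or>
     Es = [2, 9, 16, 17] \<or> Es = [3, 9, 14, 19] \<or> Es = [4, 10, 11, 18] \<or> Es = [5, 8, 13, 18] \<or>
     Es = [6, 10, 15, 17] \<or> Es = [7, 13, 14, 15]" by (simp add: TL_def)
  then show ?thesis
    using res0[OF g] res1[OF g] res2[OF g] res3[OF g] res4[OF g] res5[OF g] res6[OF g] res7[OF g] res8[OF g] res9[OF g] Es(2)
    by (elim disjE) simp_all
qed


end
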